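(* Every orbit in $\mathbf B_{IX}$ has a non-empty $\omega$-limit set, and this set is contained in $\overline{\mathbf B}_{\mathrm{VII}_0}$, the closure of the union of the three Bianchi type $\mathrm{VII}_0$ subsets.
   Context: Fix $w$ with $-\tfrac13<w<1$. Variables $(\bar H,\bar\Sigma_1,\bar\Sigma_2,\bar\Sigma_3,\bar N_1,\bar N_2,\bar N_3)\in\mathbb R^7$; set $\bar\Sigma^2=\tfrac16(\bar\Sigma_1^2+\bar\Sigma_2^2+\bar\Sigma_3^2)$ and $\bar\Omega=1-\bar\Sigma^2-\tfrac1{12}(\bar N_1^2+\bar N_2^2+\bar N_3^2)$. Admissible states satisfy $\bar\Sigma_1+\bar\Sigma_2+\bar\Sigma_3=0$, $\bar H^2+\tfrac16(\bar N_1\bar N_2+\bar N_1\bar N_3+\bar N_2\bar N_3)=1$, $\bar\Omega\ge0$. The dynamics in the time $\tau$ (increasing towards the past singularity) is $\frac{d\bar H}{d\tau}=\bar q(1-\bar H^2)-\bar F\bar H$, $\frac{d\bar\Sigma_\alpha}{d\tau}=\bar\Sigma_\alpha[(2-\bar q)\bar H-\bar F]+{}^3\bar S_\alpha$, $\frac{d\bar N_\alpha}{d\tau}=-\bar N_\alpha[\bar q\bar H+2\bar\Sigma_\alpha+\bar F]$ (no sum), with $\bar q=2\bar\Sigma^2+\tfrac12(1+3w)\bar\Omega$, $\bar F=\tfrac16(\bar N_1\bar N_2\bar\Sigma_3+\bar N_1\bar\Sigma_2\bar N_3+\bar\Sigma_1\bar N_2\bar N_3)$, ${}^3\bar S_\alpha=\tfrac13[\bar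 N_\alpha(2\bar N_\alpha-\bar N_\beta-\bar N_\gamma)-(\bar N_\beta-\bar N_\gamma)^2]$ for $(\alpha\beta\gamma)\in\{(123),(231),(312)\}$. $\mathbf B_{IX}=\{\bar N_1,\bar N_2,\bar N_3>0,\ \bar H>0,\ \bar\Omega\ge0\}$ (with the constraints), invariant for increasing $\tau$. $\omega$-limit sets are taken as $\tau\to+\infty$. The Bianchi $\mathrm{VII}_0$ subsets are $\mathcal B_{\bar N_\alpha\bar N_\beta}=\{\bar N_\alpha>0,\bar N_\beta>0,\bar N_\gamma=0,\bar H>0,\bar\Omega\ge0\}$ for $(\alpha\beta\gamma)\in\{(123),(231),(312)\}$, and $\mathbf B_{\mathrm{VII}_0}$ is their union. *)

theory Defs
  imports "HOL-Analysis.Analysis"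
begin

text \<open>State vector (H, Sigma1, Sigma2, Sigma3, N1, N2, N3) in real^7,
  with components indexed 0..6 (numeral type 7).\<close>

definition Hc :: "real^7 \<Rightarrow> real" where "Hc x = x $ 0"
definition S1 :: "real^7 \<Rightarrow> real" where "S1 x = x $ 1"
definition S2 :: "real^7 \<Rightarrow> real" where "S2 x = x $ 2"
definition S3 :: "real^7 \<Rightarrow> real" where "S3 x = x $ 3"
definition N1 :: "real^7 \<Rightarrow> real" where "N1 x = x $ 4"
definition N2 :: "real^7 \<Rightarrow> real" where "N2 x = x $ 5"
definition N3 :: "real^7 \<Rightarrow> real" where "N3 x = x $ 6"

definition Sig2 :: "real^7 \<Rightarrow> real" where
  "Sig2 x = (S1 x ^ 2 + S2 x ^ 2 + S3 x ^ 2) / 6"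

definition Omg :: "real^7 \<Rightarrow> real" where
  "Omg x = 1 - Sig2 x - (N1 x ^ 2 + N2 x ^ 2 + N3 x ^ 2) / 12"

definition qb :: "real \<Rightarrow> real^7 \<Rightarrow> real" where
  "qb w x = 2 * Sig2 x + (1 + 3 * w) / 2 * Omg x"

definition Fb :: "real^7 \<Rightarrow> real" where
  "Fb x = (N1 x * N2 x * S3 x + N1 x * S2 x * N3 x + S1 x * N2 x * N3 x) / 6"

text \<open>Curvature term 3S_alpha for (alpha beta gamma) cyclic.\<close>
definition Scurv :: "real \<Rightarrow> real \<Rightarrow> real \<Rightarrow> real" where
  "Scurv na nb nc = (na * (2 * na - nb - nc) - (nb - nc) ^ 2) / 3"

definition admissible :: "real^7 \<Rightarrow> bool" where
  "admissible x \<longleftrightarrow> S1 x + S2 x + S3 x = 0 \<and>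
     Hc x ^ 2 + (N1 x * N2 x + N1 x * N3 x + N2 x * N3 x) / 6 = 1 \<and>
     Omg x \<ge> 0"

definition vfield :: "real \<Rightarrow> real^7 \<Rightarrow> real^7" where
  "vfield w x = (\<chi> i.
     if i = 0 then qb w x * (1 - Hc x ^ 2) - Fb x * Hc x
     else if i = 1 then S1 x * ((2 - qb w x) * Hc x - Fb x) + Scurv (N1 x) (N2 x) (N3 x)
     else if i = 2 then S2 x * ((2 - qb w x) * Hc x - Fb x) + Scurv (N2 x) (N3 x) (N1 x)
     else if i = 3 then S3 x * ((2 - qb w x) * Hc x - Fb x) + Scurv (N3 x) (N1 x) (N2 x)
     else if i = 4 then - N1 x * (qb w x * Hc x + 2 * S1 x + Fb x)
     else if i = 5 then - N2 x * (qb w x * Hc x + 2 * S2 x + Fb x)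
     else - N3 x * (qb w x * Hc x + 2 * S3 x + Fb x))"

definition B_IX :: "(real^7) set" where
  "B_IX = {x. admissible x \<and> N1 x > 0 \<and> N2 x > 0 \<and> N3 x > 0 \<and> Hc x > 0}"

definition B_N1N2 :: "(real^7) set" where
  "B_N1N2 = {x. admissible x \<and> N1 x > 0 \<and> N2 x > 0 \<and> N3 x = 0 \<and> Hc x > 0}"
definition B_N2N3 :: "(real^7) set" where
  "B_N2N3 = {x. admissible x \<and> N2 x > 0 \<and> N3 x > 0 \<and> N1 x = 0 \<and> Hc x > 0}"
definition B_N3N1 :: "(real^7) set" where
  "B_N3N1 = {x. admissible x \<and> N3 x > 0 \<and> N1 x > 0 \<and> N2 x = 0 \<and> Hc x > 0}"

definition B_VII0 :: "(real^7) set" where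
  "B_VII0 = B_N1N2 \<union> B_N2N3 \<union> B_N3N1"

definition omega_limit :: "(real \<Rightarrow> 'a::topological_space) \<Rightarrow> 'a set" where
  "omega_limit x = {y. \<exists>s :: nat \<Rightarrow> real. filterlim s at_top sequentially \<and>
                         ((\<lambda>n. x (s n)) \<longlongrightarrow> y) sequentially}"

end

theory Submission
  imports Defs
begin

lemma vf:
 "Hc (vfield w x) = qb w x * (1 - Hc x ^ 2) - Fb x * Hc x"
 "S1 (vfield w x) = S1 x * ((2 - qb w x) * Hc x - Fb x) + Scurv (N1 x) (N2 x) (N3 x)"
 "S2 (vfield w x) = S2 x * ((2 - qb w x) * Hc x - Fb x) + Scurv (N2 x) (N3 x) (N1 x)"
 "S3 (vfield w x) = S3 x * ((2 - qb w x) * Hc x - Fb x) + Scurv (N3 x) (N1 x) (N2 x)"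
 "N1 (vfield w x) = - N1 x * (qb w x * Hc x + 2 * S1 x + Fb x)"
 "N2 (vfield w x) = - N2 x * (qb w x * Hc x + 2 * S2 x + Fb x)"
 "N3 (vfield w x) = - N3 x * (qb w x * Hc x + 2 * S3 x + Fb x)"
  by (simp_all add: vfield_def Hc_def S1_def S2_def S3_def N1_def N2_def N3_def)

lemma id_sum: "S1 (vfield w z) + S2 (vfield w z) + S3 (vfield w z) = (S1 z + S2 z + S3 z) * ((2 - qb w z) * Hc z - Fb z)"
  by (simp add: vf Scurv_def algebra_simps power2_eq_square divide_simps)

lemma id_Omg: assumes "S1 z + S2 z + S3 z = 0"
  shows "-(S1 z * S1 (vfield w z) + S2 z * S2 (vfield w z) + S3 z * S3 (vfield w z))/3
     - (N1 z * N1 (vfield w z) + N2 z * N2 (vfield w z) + N3 z * N3 (vfield w z))/6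
   = Omg z * (-2*(qb w z * Hc z + Fb z) + (1+3*w)*Hc z)"
proof -
  have c: "S3 z = - S1 z - S2 z" using assms by linarith
  show ?thesis unfolding vf c Scurv_def qb_def Omg_def Sig2_def Fb_def
    by (simp add: algebra_simps power2_eq_square divide_simps)
qed

lemma id_C: assumes "S1 z + S2 z + S3 z = 0"
  shows "2 * Hc z * Hc (vfield w z) + (N1 (vfield w z) * N2 z + N1 z * N2 (vfield w z)
     + N1 (vfield w z) * N3 z + N1 z * N3 (vfield w z) + N2 (vfield w z) * N3 z + N2 z * N3 (vfield w z)) / 6
   = -2 * (qb w z * Hc z + Fb z) * (Hc z ^ 2 + (N1 z * N2 z + N1 z * N3 z + N2 z * N3 z) / 6 - 1)"
proof -
  have c: "S3 z = - S1 z - S2 z" using assms by linarith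
  show ?thesis unfolding vf c Fb_def
    by (simp add: algebra_simps power2_eq_square divide_simps)
qed

lemma id_D: assumes "S1 z + S2 z + S3 z = 0"
  shows "3 * Hc z ^ 2 * Hc (vfield w z) - k * (N1 (vfield w z) * N2 z * N3 z + N1 z * N2 (vfield w z) * N3 z + N1 z * N2 z * N3 (vfield w z))
   = -3 * (qb w z * Hc z + Fb z) * (Hc z ^ 3 - k * (N1 z * N2 z * N3 z)) + 3 * qb w z * Hc z ^ 2"
proof -
  have c: "S3 z = - S1 z - S2 z" using assms by linarith
  show ?thesis unfolding vf c
    by (simp add: algebra_simps power2_eq_square power3_eq_cube)
qed

lemma id_num: assumes "S1 z + S2 z + S3 z = 0"
  shows "(N1 (vfield w z) * N2 z * N3 z + N1 z * N2 (vfield w z) * N3 z + N1 z * N2 z * N3 (vfield w z)) * Hc z ^ 3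
     - (N1 z * N2 z * N3 z) * (3 * Hc z ^ 2 * Hc (vfield w z))
   = -3 * qb w z * Hc z ^ 2 * (N1 z * N2 z * N3 z)"
proof -
  have c: "S3 z = - S1 z - S2 z" using assms by linarith
  show ?thesis unfolding vf c
    by (simp add: algebra_simps power2_eq_square power3_eq_cube)
qed


lemma comp_der:
  assumes "(x has_vector_derivative v) F"
  shows "((\<lambda>t. Hc (x t)) has_real_derivative Hc v) F"
    "((\<lambda>t. S1 (x t)) has_real_derivative S1 v) F"
    "((\<lambda>t. S2 (x t)) has_real_derivative S2 v) F"
    "((\<lambda>t. S3 (x t)) has_real_derivative S3 v) F"
    "((\<lambda>t. N1 (x t)) has_real_derivative N1 v) F"
    "((\<lambda>t. N2 (x t)) has_real_derivative N2 v) F"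
    "((\<lambda>t. N3 (x t)) has_real_derivative N3 v) F"
  using bounded_linear.has_vector_derivative[OF bounded_linear_vec_nth assms]
  by (auto simp: has_real_derivative_iff_has_vector_derivative Hc_def S1_def S2_def S3_def N1_def N2_def N3_def)

lemma IF:
  fixes g a f :: "real \<Rightarrow> real"
  assumes T: "0 \<le> T" and ca: "continuous_on {0..T} a"
    and dg: "\<And>t. 0 \<le> t \<Longrightarrow> t \<le> T \<Longrightarrow> (g has_real_derivative (a t * g t + f t)) (at t within {0..})"
    and f: "\<And>t. 0 \<le> t \<Longrightarrow> t \<le> T \<Longrightarrow> f t \<ge> 0"
  shows "g 0 \<le> g T * exp (- integral {0..T} a)"
proof -
  define E where "E t = exp (- integral {0..t} a)" for t
  have dE: "(E has_real_derivative (E t * (- a t))) (at t within {0..T})" if "t \<in> {0..T}" for t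
  proof -
    have "((\<lambda>t. integral {0..t} a) has_real_derivative a t) (at t within {0..T})"
      by (rule integral_has_real_derivative[OF ca that])
    then show ?thesis unfolding E_def
      by (auto intro!: derivative_eq_intros)
  qed
  have dh: "((\<lambda>t. g t * E t) has_real_derivative f t * E t) (at t within {0..T})" if "t \<in> {0..T}" for t
  proof -
    have "(g has_real_derivative (a t * g t + f t)) (at t within {0..T})"
      using dg[of t] that by (auto intro: DERIV_subset)
    then show ?thesis using dE[OF that]
      by (auto intro!: derivative_eq_intros simp: algebra_simps)
  qed
  have cont: "continuous_on {0..T} (\<lambda>t. g t * E t)"
    using dh DERIV_continuous continuous_on_eq_continuous_within by blast
  have "g 0 * E 0 \<le> g T * E T"
  proof (rule DERIV_nonneg_imp_increasing_open[OF T _ cont])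
    fix t :: real assume "0 < t" "t < T"
    then have "((\<lambda>t. g t * E t) has_real_derivative f t * E t) (at t)"
      using dh[of t] at_within_Icc_at[of 0 t T] by auto
    moreover have "f t * E t \<ge> 0" using f[of t] \<open>0 < t\<close> \<open>t < T\<close> by (simp add: E_def)
    ultimately show "\<exists>y. ((\<lambda>t. g t * E t) has_real_derivative y) (at t) \<and> 0 \<le> y" by blast
  qed
  then show ?thesis by (simp add: E_def)
qed

lemma IF_nonneg:
  fixes g a f :: "real \<Rightarrow> real"
  assumes T: "0 \<le> T" and ca: "continuous_on {0..T} a"
    and dg: "\<And>t. 0 \<le> t \<Longrightarrow> t \<le> T \<Longrightarrow> (g has_real_derivative (a t * g t + f t)) (at t within {0..})"
    and f: "\<And>t. 0 \<le> t \<Longrightarrow> t \<le> T \<Longrightarrow> f t \<ge> 0"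
    and g0: "g 0 \<ge> 0"
  shows "g T \<ge> 0"
  using IF[OF T ca dg f] g0 by (smt (verit) exp_gt_zero mult_less_0_iff)

lemma IF_pos:
  fixes g a :: "real \<Rightarrow> real"
  assumes T: "0 \<le> T" and ca: "continuous_on {0..T} a"
    and dg: "\<And>t. 0 \<le> t \<Longrightarrow> t \<le> T \<Longrightarrow> (g has_real_derivative (a t * g t)) (at t within {0..})"
    and g0: "g 0 > 0"
  shows "g T > 0"
proof -
  have "g 0 \<le> g T * exp (- integral {0..T} a)"
    by (rule IF[OF T ca, where f="\<lambda>_. 0"]) (use dg in auto)
  then show ?thesis using g0 by (smt (verit) exp_gt_zero mult_le_0_iff)
qed

lemma IF_zero:
  fixes g a :: "real \<Rightarrow> real"
  assumes T: "0 \<le> T" and ca: "continuous_on {0..T} a"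
    and dg: "\<And>t. 0 \<le> t \<Longrightarrow> t \<le> T \<Longrightarrow> (g has_real_derivative (a t * g t)) (at t within {0..})"
    and g0: "g 0 = 0"
  shows "g T = 0"
proof -
  have 1: "g 0 \<le> g T * exp (- integral {0..T} a)"
    by (rule IF[OF T ca, where f="\<lambda>_. 0"]) (use dg in auto)
  have 2: "- g 0 \<le> - g T * exp (- integral {0..T} a)"
    by (rule IF[OF T ca, where f="\<lambda>_. 0" and g="\<lambda>t. - g t"]) (use dg in \<open>auto intro!: derivative_eq_intros\<close>)
  from 1 2 g0 show ?thesis by (smt (verit) exp_gt_zero mult_le_0_iff mult_minus_left zero_less_mult_iff)
qed


locale traj =
  fixes w :: real and x :: "real \<Rightarrow> real^7"
  assumes w1: "-(1/3) < w" and w2: "w < 1"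
    and x0: "x 0 \<in> B_IX"
    and der: "\<And>t. t \<ge> 0 \<Longrightarrow> (x has_vector_derivative vfield w (x t)) (at t within {0..})"
begin

lemma contx: "continuous_on {0..} x"
  by (rule continuous_on_vector_derivative) (use der in auto)

lemma contT: "continuous_on {0..T} x"
  using contx by (rule continuous_on_subset) auto

lemmas cd = comp_der[OF der]

lemma sum0: assumes "t \<ge> 0" shows "S1 (x t) + S2 (x t) + S3 (x t) = 0"
proof -
  have "(\<lambda>t. S1 (x t) + S2 (x t) + S3 (x t)) t = 0"
  proof (rule IF_zero[where g = "\<lambda>t. S1 (x t) + S2 (x t) + S3 (x t)" and T = t and a = "\<lambda>t. (2 - qb w (x t)) * Hc (x t) - Fb (x t)"])
    show "0 \<le> t" by fact
    show "continuous_on {0..t} (\<lambda>t. (2 - qb w (x t)) * Hc (x t) - Fb (x t))"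
      unfolding qb_def Sig2_def Omg_def Fb_def Hc_def S1_def S2_def S3_def N1_def N2_def N3_def
      by (intro continuous_intros contT) auto
    fix s :: real assume s: "0 \<le> s" "s \<le> t"
    show "((\<lambda>t. S1 (x t) + S2 (x t) + S3 (x t)) has_real_derivative
        ((2 - qb w (x s)) * Hc (x s) - Fb (x s)) * (S1 (x s) + S2 (x s) + S3 (x s))) (at s within {0..})"
      apply (rule derivative_eq_intros cd[OF s(1)] refl)+
      using id_sum[of w "x s"] by (simp add: algebra_simps)
  next
    have "x 0 \<in> B_IX" by (rule x0)
    then show "S1 (x 0) + S2 (x 0) + S3 (x 0) = 0" by (simp add: B_IX_def admissible_def)
  qed
  then show ?thesis by simp
qed

lemma Omg_nonneg: assumes "t \<ge> 0" shows "Omg (x t) \<ge> 0"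
proof (rule IF_nonneg[where g = "\<lambda>t. Omg (x t)" and T = t and a = "\<lambda>t. -2*(qb w (x t) * Hc (x t) + Fb (x t)) + (1+3*w)*Hc (x t)" and f = "\<lambda>_. 0"])
  show "0 \<le> t" by fact
  show "continuous_on {0..t} (\<lambda>t. -2*(qb w (x t) * Hc (x t) + Fb (x t)) + (1+3*w)*Hc (x t))"
    unfolding qb_def Sig2_def Omg_def Fb_def Hc_def S1_def S2_def S3_def N1_def N2_def N3_def
    by (intro continuous_intros contT) auto
  fix s :: real assume s: "0 \<le> s" "s \<le> t"
  have e: "- (S1 (x s) * S1 (vfield w (x s)) + S2 (x s) * S2 (vfield w (x s)) + S3 (x s) * S3 (vfield w (x s))) / 3 -
    (N1 (x s) * N1 (vfield w (x s)) + N2 (x s) * N2 (vfield w (x s)) + N3 (x s) * N3 (vfield w (x s))) / 6 =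
    Omg (x s) * (- 2 * (qb w (x s) * Hc (x s) + Fb (x s)) + (1 + 3 * w) * Hc (x s))"
    by (rule id_Omg[OF sum0]) (use s in auto)
  have "((\<lambda>t. Omg (x t)) has_real_derivative
      (- (S1 (x s) * S1 (vfield w (x s)) + S2 (x s) * S2 (vfield w (x s)) + S3 (x s) * S3 (vfield w (x s))) / 3 -
    (N1 (x s) * N1 (vfield w (x s)) + N2 (x s) * N2 (vfield w (x s)) + N3 (x s) * N3 (vfield w (x s))) / 6)) (at s within {0..})"
    unfolding Omg_def Sig2_def
    by (auto intro!: derivative_eq_intros cd[OF s(1)] simp: field_simps)
  then show "((\<lambda>t. Omg (x t)) has_real_derivative
        (-2*(qb w (x s) * Hc (x s) + Fb (x s)) + (1+3*w)*Hc (x s)) * Omg (x s) + 0) (at s within {0..})"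
    by (rule DERIV_cong) (unfold e, simp)
next
  show "0 \<le> (0::real)" by simp
next
  have "x 0 \<in> B_IX" by (rule x0)
  then show "Omg (x 0) \<ge> 0" by (simp add: B_IX_def admissible_def)
qed


lemma qb_nonneg: "Omg z \<ge> 0 \<Longrightarrow> qb w z \<ge> 0"
  using w1 unfolding qb_def Sig2_def
  by (intro add_nonneg_nonneg mult_nonneg_nonneg) auto

lemma x0B: "admissible (x 0)" "N1 (x 0) > 0" "N2 (x 0) > 0" "N3 (x 0) > 0" "Hc (x 0) > 0"
  using x0 by (auto simp: B_IX_def)

lemma C1: assumes "t \<ge> 0" shows "Hc (x t) ^ 2 + (N1 (x t) * N2 (x t) + N1 (x t) * N3 (x t) + N2 (x t) * N3 (x t)) / 6 = 1"
proof -
  have "(\<lambda>t. Hc (x t) ^ 2 + (N1 (x t) * N2 (x t) + N1 (x t) * N3 (x t) + N2 (x t) * N3 (x t)) / 6 - 1) t = 0"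
  proof (rule IF_zero[where g = "\<lambda>t. Hc (x t) ^ 2 + (N1 (x t) * N2 (x t) + N1 (x t) * N3 (x t) + N2 (x t) * N3 (x t)) / 6 - 1" and T = t and a = "\<lambda>t. -2 * (qb w (x t) * Hc (x t) + Fb (x t))"])
    show "0 \<le> t" by fact
    show "continuous_on {0..t} (\<lambda>t. -2 * (qb w (x t) * Hc (x t) + Fb (x t)))"
      unfolding qb_def Sig2_def Omg_def Fb_def Hc_def S1_def S2_def S3_def N1_def N2_def N3_def
      by (intro continuous_intros contT) auto
    fix s :: real assume s: "0 \<le> s" "s \<le> t"
    have e: "2 * Hc (x s) * Hc (vfield w (x s)) + (N1 (vfield w (x s)) * N2 (x s) + N1 (x s) * N2 (vfield w (x s))
     + N1 (vfield w (x s)) * N3 (x s) + N1 (x s) * N3 (vfield w (x s)) + N2 (vfield w (x s)) * N3 (x s) + N2 (x s) * N3 (vfield w (x s))) / 6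
   = -2 * (qb w (x s) * Hc (x s) + Fb (x s)) * (Hc (x s) ^ 2 + (N1 (x s) * N2 (x s) + N1 (x s) * N3 (x s) + N2 (x s) * N3 (x s)) / 6 - 1)"
      by (rule id_C[OF sum0]) (use s in auto)
    have "((\<lambda>t. Hc (x t) ^ 2 + (N1 (x t) * N2 (x t) + N1 (x t) * N3 (x t) + N2 (x t) * N3 (x t)) / 6 - 1) has_real_derivative
      2 * Hc (x s) * Hc (vfield w (x s)) + (N1 (vfield w (x s)) * N2 (x s) + N1 (x s) * N2 (vfield w (x s))
     + N1 (vfield w (x s)) * N3 (x s) + N1 (x s) * N3 (vfield w (x s)) + N2 (vfield w (x s)) * N3 (x s) + N2 (x s) * N3 (vfield w (x s))) / 6)
      (at s within {0..})"
      by (auto intro!: derivative_eq_intros cd[OF s(1)] simp: field_simps)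
    then show "((\<lambda>t. Hc (x t) ^ 2 + (N1 (x t) * N2 (x t) + N1 (x t) * N3 (x t) + N2 (x t) * N3 (x t)) / 6 - 1) has_real_derivative
      -2 * (qb w (x s) * Hc (x s) + Fb (x s)) * (Hc (x s) ^ 2 + (N1 (x s) * N2 (x s) + N1 (x s) * N3 (x s) + N2 (x s) * N3 (x s)) / 6 - 1)) (at s within {0..})"
      by (rule DERIV_cong) (unfold e, simp)
  next
    show "Hc (x 0) ^ 2 + (N1 (x 0) * N2 (x 0) + N1 (x 0) * N3 (x 0) + N2 (x 0) * N3 (x 0)) / 6 - 1 = 0"
      using x0B(1) by (simp add: admissible_def)
  qed
  then show ?thesis by simp
qed

lemma N1pos: assumes "t \<ge> 0" shows "N1 (x t) > 0"
proof (rule IF_pos[where g = "\<lambda>t. N1 (x t)" and T = t and a = "\<lambda>t. - (qb w (x t) * Hc (x t) + 2 * S1 (x t) + Fb (x t))"])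
  show "0 \<le> t" by fact
  show "continuous_on {0..t} (\<lambda>t. - (qb w (x t) * Hc (x t) + 2 * S1 (x t) + Fb (x t)))"
    unfolding qb_def Sig2_def Omg_def Fb_def Hc_def S1_def S2_def S3_def N1_def N2_def N3_def
    by (intro continuous_intros contT) auto
  fix s :: real assume s: "0 \<le> s" "s \<le> t"
  show "((\<lambda>t. N1 (x t)) has_real_derivative - (qb w (x s) * Hc (x s) + 2 * S1 (x s) + Fb (x s)) * N1 (x s)) (at s within {0..})"
    by (rule DERIV_cong[OF cd(5)[OF s(1)]]) (simp add: vf algebra_simps)
qed (use x0B in auto)

lemma N2pos: assumes "t \<ge> 0" shows "N2 (x t) > 0"
proof (rule IF_pos[where g = "\<lambda>t. N2 (x t)" and T = t and a = "\<lambda>t. - (qb w (x t) * Hc (x t) + 2 * S2 (x t) + Fb (x t))"])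
  show "0 \<le> t" by fact
  show "continuous_on {0..t} (\<lambda>t. - (qb w (x t) * Hc (x t) + 2 * S2 (x t) + Fb (x t)))"
    unfolding qb_def Sig2_def Omg_def Fb_def Hc_def S1_def S2_def S3_def N1_def N2_def N3_def
    by (intro continuous_intros contT) auto
  fix s :: real assume s: "0 \<le> s" "s \<le> t"
  show "((\<lambda>t. N2 (x t)) has_real_derivative - (qb w (x s) * Hc (x s) + 2 * S2 (x s) + Fb (x s)) * N2 (x s)) (at s within {0..})"
    by (rule DERIV_cong[OF cd(6)[OF s(1)]]) (simp add: vf algebra_simps)
qed (use x0B in auto)

lemma N3pos: assumes "t \<ge> 0" shows "N3 (x t) > 0"
proof (rule IF_pos[where g = "\<lambda>t. N3 (x t)" and T = t and a = "\<lambda>t. - (qb w (x t) * Hc (x t) + 2 * S3 (x t) + Fb (x t))"])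
  show "0 \<le> t" by fact
  show "continuous_on {0..t} (\<lambda>t. - (qb w (x t) * Hc (x t) + 2 * S3 (x t) + Fb (x t)))"
    unfolding qb_def Sig2_def Omg_def Fb_def Hc_def S1_def S2_def S3_def N1_def N2_def N3_def
    by (intro continuous_intros contT) auto
  fix s :: real assume s: "0 \<le> s" "s \<le> t"
  show "((\<lambda>t. N3 (x t)) has_real_derivative - (qb w (x s) * Hc (x s) + 2 * S3 (x s) + Fb (x s)) * N3 (x s)) (at s within {0..})"
    by (rule DERIV_cong[OF cd(7)[OF s(1)]]) (simp add: vf algebra_simps)
qed (use x0B in auto)

definition k0 where "k0 = Hc (x 0) ^ 3 / (N1 (x 0) * N2 (x 0) * N3 (x 0))"

lemma k0pos: "k0 > 0" unfolding k0_def using x0B by auto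

lemma Dnonneg: assumes "t \<ge> 0" shows "Hc (x t) ^ 3 - k0 * (N1 (x t) * N2 (x t) * N3 (x t)) \<ge> 0"
proof (rule IF_nonneg[where g = "\<lambda>t. Hc (x t) ^ 3 - k0 * (N1 (x t) * N2 (x t) * N3 (x t))" and T = t
    and a = "\<lambda>t. -3 * (qb w (x t) * Hc (x t) + Fb (x t))" and f = "\<lambda>t. 3 * qb w (x t) * Hc (x t) ^ 2"])
  show "0 \<le> t" by fact
  show "continuous_on {0..t} (\<lambda>t. -3 * (qb w (x t) * Hc (x t) + Fb (x t)))"
    unfolding qb_def Sig2_def Omg_def Fb_def Hc_def S1_def S2_def S3_def N1_def N2_def N3_def
    by (intro continuous_intros contT) auto
  fix s :: real assume s: "0 \<le> s" "s \<le> t"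
  have e: "3 * Hc (x s) ^ 2 * Hc (vfield w (x s)) - k0 * (N1 (vfield w (x s)) * N2 (x s) * N3 (x s) + N1 (x s) * N2 (vfield w (x s)) * N3 (x s) + N1 (x s) * N2 (x s) * N3 (vfield w (x s)))
   = -3 * (qb w (x s) * Hc (x s) + Fb (x s)) * (Hc (x s) ^ 3 - k0 * (N1 (x s) * N2 (x s) * N3 (x s))) + 3 * qb w (x s) * Hc (x s) ^ 2"
    by (rule id_D[OF sum0]) (use s in auto)
  have "((\<lambda>t. Hc (x t) ^ 3 - k0 * (N1 (x t) * N2 (x t) * N3 (x t))) has_real_derivative
     3 * Hc (x s) ^ 2 * Hc (vfield w (x s)) - k0 * (N1 (vfield w (x s)) * N2 (x s) * N3 (x s) + N1 (x s) * N2 (vfield w (x s)) * N3 (x s) + N1 (x s) * N2 (x s) * N3 (vfield w (x s))))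
      (at s within {0..})"
    by (auto intro!: derivative_eq_intros cd[OF s(1)] simp: field_simps)
  then show "((\<lambda>t. Hc (x t) ^ 3 - k0 * (N1 (x t) * N2 (x t) * N3 (x t))) has_real_derivative
     -3 * (qb w (x s) * Hc (x s) + Fb (x s)) * (Hc (x s) ^ 3 - k0 * (N1 (x s) * N2 (x s) * N3 (x s))) + 3 * qb w (x s) * Hc (x s) ^ 2) (at s within {0..})"
    by (rule DERIV_cong) (unfold e, simp)
  show "0 \<le> 3 * qb w (x s) * Hc (x s) ^ 2"
    using qb_nonneg[OF Omg_nonneg[OF s(1)]] by simp
next
  show "0 \<le> Hc (x 0) ^ 3 - k0 * (N1 (x 0) * N2 (x 0) * N3 (x 0))"
    unfolding k0_def using x0B by simp
qed

lemma Hpos: assumes "t \<ge> 0" shows "Hc (x t) > 0"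
proof -
  have "k0 * (N1 (x t) * N2 (x t) * N3 (x t)) > 0"
    using k0pos N1pos[OF assms] N2pos[OF assms] N3pos[OF assms] by simp
  then have "Hc (x t) ^ 3 > 0" using Dnonneg[OF assms] by linarith
  then show ?thesis by (simp add: zero_less_power_eq)
qed

lemma adm: assumes "t \<ge> 0" shows "admissible (x t)"
  using sum0[OF assms] C1[OF assms] Omg_nonneg[OF assms] by (simp add: admissible_def)

lemma inB: assumes "t \<ge> 0" shows "x t \<in> B_IX"
  using adm[OF assms] N1pos[OF assms] N2pos[OF assms] N3pos[OF assms] Hpos[OF assms] by (simp add: B_IX_def)

lemma der_at: assumes "t > 0" shows "(x has_vector_derivative vfield w (x t)) (at t)"
proof -
  have "at t within {0..} = at t" by (rule at_within_interior) (use assms in simp)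
  then show ?thesis using der[of t] assms by simp
qed

lemmas cda = comp_der[OF der_at]

definition Mf :: "real^7 \<Rightarrow> real" where "Mf z = N1 z * N2 z * N3 z / Hc z ^ 3"
definition Phi :: "real^7 \<Rightarrow> real" where "Phi z = 3 * qb w z * (N1 z * N2 z * N3 z) / Hc z ^ 4"

lemma dM: assumes "t > 0" shows "((\<lambda>t. Mf (x t)) has_real_derivative - Phi (x t)) (at t)"
proof -
  have H: "Hc (x t) \<noteq> 0" using Hpos[of t] assms by auto
  have e: "(N1 (vfield w (x t)) * N2 (x t) * N3 (x t) + N1 (x t) * N2 (vfield w (x t)) * N3 (x t) + N1 (x t) * N2 (x t) * N3 (vfield w (x t))) * Hc (x t) ^ 3
     - (N1 (x t) * N2 (x t) * N3 (x t)) * (3 * Hc (x t) ^ 2 * Hc (vfield w (x t)))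
   = -3 * qb w (x t) * Hc (x t) ^ 2 * (N1 (x t) * N2 (x t) * N3 (x t))"
    by (rule id_num[OF sum0]) (use assms in auto)
  have "((\<lambda>t. Mf (x t)) has_real_derivative
      ((N1 (vfield w (x t)) * N2 (x t) * N3 (x t) + N1 (x t) * N2 (vfield w (x t)) * N3 (x t) + N1 (x t) * N2 (x t) * N3 (vfield w (x t))) * Hc (x t) ^ 3
     - (N1 (x t) * N2 (x t) * N3 (x t)) * (3 * Hc (x t) ^ 2 * Hc (vfield w (x t)))) / (Hc (x t) ^ 3) ^ 2) (at t)"
    unfolding Mf_def using H
    by (auto intro!: derivative_eq_intros cda[OF assms] simp: field_simps power2_eq_square)
  then show ?thesis
    by (rule DERIV_cong) (unfold e, use H in \<open>simp add: Phi_def field_simps eval_nat_numeral\<close>)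
qed

lemma Phi_nonneg: assumes "t \<ge> 0" shows "Phi (x t) \<ge> 0"
  using qb_nonneg[OF Omg_nonneg[OF assms]] N1pos[OF assms] N2pos[OF assms] N3pos[OF assms] Hpos[OF assms]
  unfolding Phi_def by simp

lemma M_mono: assumes "0 < a" "a \<le> b" shows "Mf (x b) \<le> Mf (x a)"
proof (rule DERIV_nonpos_imp_nonincreasing[OF assms(2)])
  fix t assume "a \<le> t" "t \<le> b"
  then show "\<exists>y. ((\<lambda>t. Mf (x t)) has_real_derivative y) (at t) \<and> y \<le> 0"
    using dM[of t] Phi_nonneg[of t] assms by (intro exI[of _ "- Phi (x t)"]) auto
qed

end


lemma exhaust_7: fixes i :: 7 shows "i = 0 \<or> i = 1 \<or> i = 2 \<or> i = 3 \<or> i = 4 \<or> i = 5 \<or> i = 6"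
proof (induct i)
  case (of_int z)
  then have "z = 0 \<or> z = 1 \<or> z = 2 \<or> z = 3 \<or> z = 4 \<or> z = 5 \<or> z = 6" by fastforce
  then show ?case by auto
qed

lemma UNIV7: "(UNIV :: 7 set) = {0,1,2,3,4,5,6}"
  using exhaust_7 by auto

lemma sum7: "(\<Sum>i\<in>UNIV. f i) = f (0::7) + f 1 + f 2 + f 3 + f 4 + f 5 + f 6"
  unfolding UNIV7 by (simp add: algebra_simps)

definition Kset :: "(real^7) set" where
  "Kset = {z. admissible z \<and> N1 z \<ge> 0 \<and> N2 z \<ge> 0 \<and> N3 z \<ge> 0 \<and> Hc z \<ge> 0}"

lemma sq_bound: fixes u c :: real assumes "u ^ 2 \<le> c ^ 2" "c \<ge> 0" shows "\<bar>u\<bar> \<le> c"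
  using power2_le_imp_le[of "\<bar>u\<bar>" c] assms by simp

lemma Kbound: assumes "z \<in> Kset" shows "norm z \<le> 22"
proof -
  have a: "admissible z" and n: "N1 z \<ge> 0" "N2 z \<ge> 0" "N3 z \<ge> 0" "Hc z \<ge> 0"
    using assms by (auto simp: Kset_def)
  have gen: "A \<le> 6 \<and> Bn \<le> 12" if "1 - A / 6 - Bn / 12 \<ge> 0" "A \<ge> 0" "Bn \<ge> 0" for A Bn :: real
    using that by linarith
  have o: "S1 z ^ 2 + S2 z ^ 2 + S3 z ^ 2 \<le> 6 \<and> N1 z ^ 2 + N2 z ^ 2 + N3 z ^ 2 \<le> 12"
    by (rule gen) (use a in \<open>simp_all add: admissible_def Omg_def Sig2_def\<close>)
  have "N1 z * N2 z + N1 z * N3 z + N2 z * N3 z \<ge> 0" using n by simp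
  moreover have "Hc z ^ 2 = 1 - (N1 z * N2 z + N1 z * N3 z + N2 z * N3 z) / 6"
    using a by (simp add: admissible_def algebra_simps)
  ultimately have c: "Hc z ^ 2 \<le> 1 ^ 2" by simp
  have p: "S1 z ^ 2 \<ge> 0" "S2 z ^ 2 \<ge> 0" "S3 z ^ 2 \<ge> 0" "N1 z ^ 2 \<ge> 0" "N2 z ^ 2 \<ge> 0" "N3 z ^ 2 \<ge> 0"
    by simp_all
  have "S1 z ^ 2 \<le> 9" using o p by linarith
  then have "\<bar>S1 z\<bar> \<le> 3" by (intro sq_bound) simp_all
  moreover have "S2 z ^ 2 \<le> 9" using o p by linarith
  then have "\<bar>S2 z\<bar> \<le> 3" by (intro sq_bound) simp_all
  moreover have "S3 z ^ 2 \<le> 9" using o p by linarith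
  then have "\<bar>S3 z\<bar> \<le> 3" by (intro sq_bound) simp_all
  moreover have "N1 z ^ 2 \<le> 16" using o p by linarith
  then have "\<bar>N1 z\<bar> \<le> 4" by (intro sq_bound) simp_all
  moreover have "N2 z ^ 2 \<le> 16" using o p by linarith
  then have "\<bar>N2 z\<bar> \<le> 4" by (intro sq_bound) simp_all
  moreover have "N3 z ^ 2 \<le> 16" using o p by linarith
  then have "\<bar>N3 z\<bar> \<le> 4" by (intro sq_bound) simp_all
  moreover have "\<bar>Hc z\<bar> \<le> 1" by (rule sq_bound) (use c in auto)
  ultimately show ?thesis
    using norm_le_l1_cart[of z] unfolding sum7 Hc_def S1_def S2_def S3_def N1_def N2_def N3_def by linarith
qed

lemma cont_vf_comp:
  "continuous_on UNIV Hc" "continuous_on UNIV S1" "continuous_on UNIV S2" "continuous_on UNIV S3"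
  "continuous_on UNIV N1" "continuous_on UNIV N2" "continuous_on UNIV N3"
  unfolding Hc_def S1_def S2_def S3_def N1_def N2_def N3_def
  by (intro continuous_intros)+

lemma Kclosed: "closed Kset"
proof -
  have "Kset = {z. S1 z + S2 z + S3 z = 0} \<inter> {z. Hc z ^ 2 + (N1 z * N2 z + N1 z * N3 z + N2 z * N3 z) / 6 = 1}
     \<inter> {z. 0 \<le> Omg z} \<inter> {z. 0 \<le> N1 z} \<inter> {z. 0 \<le> N2 z} \<inter> {z. 0 \<le> N3 z} \<inter> {z. 0 \<le> Hc z}"
    by (auto simp: Kset_def admissible_def)
  also have "closed \<dots>"
    unfolding Omg_def Sig2_def Hc_def S1_def S2_def S3_def N1_def N2_def N3_def
    by (intro closed_Int closed_Collect_eq closed_Collect_le continuous_intros) auto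
  finally show ?thesis .
qed

lemma Kcompact: "compact Kset"
  using Kclosed Kbound by (metis bounded_iff compact_eq_bounded_closed)

lemma cont_if: "continuous_on S f \<Longrightarrow> continuous_on S g \<Longrightarrow> continuous_on S (\<lambda>z. if P then f z else g z)"
  by (cases P) auto

lemma cont_vfield: "continuous_on UNIV (vfield w)"
  unfolding vfield_def qb_def Fb_def Scurv_def Omg_def Sig2_def Hc_def S1_def S2_def S3_def N1_def N2_def N3_def
  by (intro continuous_on_vec_lambda cont_if continuous_intros) auto

lemma vf_bound: obtains B where "B > 0" "\<And>z. z \<in> Kset \<Longrightarrow> norm (vfield w z) \<le> B"
proof -
  have "compact (vfield w ` Kset)"
    by (rule compact_continuous_image[OF continuous_on_subset[OF cont_vfield] Kcompact]) auto
  then obtain B where "B > 0" "\<forall>y\<in>vfield w ` Kset. norm y \<le> B"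
    using compact_imp_bounded bounded_pos by metis
  then show ?thesis using that by auto
qed

context traj begin

lemma xK: "t \<ge> 0 \<Longrightarrow> x t \<in> Kset"
  using inB[of t] by (auto simp: Kset_def B_IX_def)

definition BB where "BB = (SOME B. B > 0 \<and> (\<forall>z\<in>Kset. norm (vfield w z) \<le> B))"

lemma BB: "BB > 0" "z \<in> Kset \<Longrightarrow> norm (vfield w z) \<le> BB"
proof -
  obtain B where "B > 0" "\<And>z. z \<in> Kset \<Longrightarrow> norm (vfield w z) \<le> B" using vf_bound[of w] by blast
  then have "\<exists>B. B > 0 \<and> (\<forall>z\<in>Kset. norm (vfield w z) \<le> B)" by auto
  from someI_ex[OF this] show "BB > 0" "z \<in> Kset \<Longrightarrow> norm (vfield w z) \<le> BB"
    unfolding BB_def by auto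
qed

lemma lip: assumes "0 \<le> a" "a \<le> b" shows "norm (x b - x a) \<le> BB * (b - a)"
proof (cases "a = b")
  case False
  then have ab: "a < b" using assms by auto
  have "\<exists>t\<in>{a<..<b}. norm (x b - x a) \<le> norm ((\<lambda>h. h *\<^sub>R vfield w (x t)) (b - a))"
  proof (rule mvt_general[OF ab])
    show "continuous_on {a..b} x" using contx by (rule continuous_on_subset) (use assms in auto)
    fix t assume "a < t" "t < b"
    then show "(x has_derivative (\<lambda>h. h *\<^sub>R vfield w (x t))) (at t)"
      using der_at[of t] assms unfolding has_vector_derivative_def by auto
  qed
  then obtain t where t: "a < t" "t < b" "norm (x b - x a) \<le> (b - a) * norm (vfield w (x t))"
    by auto
  have "norm (vfield w (x t)) \<le> BB" using BB(2)[OF xK] t assms by auto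
  then show ?thesis using t ab by (smt (verit) mult_left_mono mult.commute)
qed simp

end


lemma cont_nbhd:
  fixes f :: "real^7 \<Rightarrow> real"
  assumes "isCont f y" "f y > c"
  shows "\<exists>r>0. \<forall>z. dist z y < r \<longrightarrow> f z > c"
proof -
  have "eventually (\<lambda>z. f z > c) (at y)"
    using assms order_tendstoD(1) by (metis isCont_def)
  then obtain d where d: "d > 0" "\<forall>z. z \<noteq> y \<and> dist z y < d \<longrightarrow> f z > c"
    by (auto simp: eventually_at)
  then show ?thesis using assms(2) by (intro exI[of _ d]) auto
qed

lemma ev_subseq:
  assumes "eventually P sequentially" "strict_mono (r :: nat \<Rightarrow> nat)"
  shows "eventually (\<lambda>n. P (r n)) sequentially"
proof -
  obtain N where "\<forall>n\<ge>N. P n" using assms(1) by (auto simp: eventually_sequentially)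
  then show ?thesis using seq_suble[OF assms(2)] unfolding eventually_sequentially
    by (meson order.trans)
qed

context traj begin

lemma omega_K: assumes "y \<in> omega_limit x" shows "y \<in> Kset"
proof -
  obtain s where s: "filterlim s at_top sequentially" "((\<lambda>n. x (s n)) \<longlongrightarrow> y) sequentially"
    using assms by (auto simp: omega_limit_def)
  have "eventually (\<lambda>n. s n \<ge> 0) sequentially"
    using s(1) by (simp add: filterlim_at_top)
  then have "eventually (\<lambda>n. x (s n) \<in> Kset) sequentially"
    by eventually_elim (rule xK)
  then show ?thesis
    using Lim_in_closed_set[OF Kclosed _ _ s(2)] by simp
qed

lemma omega_H:
  assumes "y \<in> omega_limit x" "N1 y > 0" "N2 y > 0" "N3 y > 0"
  shows "Hc y > 0"
proof -
  obtain s where s: "filterlim s at_top sequentially" "((\<lambda>n. x (s n)) \<longlongrightarrow> y) sequentially"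
    using assms by (auto simp: omega_limit_def)
  have "eventually (\<lambda>n. s n \<ge> 0) sequentially"
    using s(1) by (simp add: filterlim_at_top)
  then have ev: "eventually (\<lambda>n. Hc (x (s n)) ^ 3 - k0 * (N1 (x (s n)) * N2 (x (s n)) * N3 (x (s n))) \<ge> 0) sequentially"
    by eventually_elim (rule Dnonneg)
  have "((\<lambda>n. Hc (x (s n)) ^ 3 - k0 * (N1 (x (s n)) * N2 (x (s n)) * N3 (x (s n)))) \<longlongrightarrow>
      Hc y ^ 3 - k0 * (N1 y * N2 y * N3 y)) sequentially"
    unfolding Hc_def N1_def N2_def N3_def by (intro tendsto_intros s(2))
  then have "Hc y ^ 3 - k0 * (N1 y * N2 y * N3 y) \<ge> 0"
    using ev by (metis (mono_tags, lifting) eventually_mono tendsto_lowerbound trivial_limit_sequentially)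
  moreover have "k0 * (N1 y * N2 y * N3 y) > 0" using k0pos assms by simp
  ultimately have "Hc y ^ 3 > 0" by linarith
  then show ?thesis by (simp add: zero_less_power_eq)
qed

lemma isCont_Mf: "Hc y \<noteq> 0 \<Longrightarrow> isCont Mf y"
  unfolding Mf_def Hc_def N1_def N2_def N3_def
  by (intro continuous_intros) (auto simp: Hc_def)

lemma isCont_Phi: "Hc y \<noteq> 0 \<Longrightarrow> isCont Phi y"
  unfolding Phi_def qb_def Omg_def Sig2_def Hc_def N1_def N2_def N3_def S1_def S2_def S3_def
  by (intro continuous_intros) (auto simp: Hc_def)

lemma omega_M:
  assumes "filterlim s at_top sequentially" "((\<lambda>n. x (s n)) \<longlongrightarrow> y) sequentially"
    and "N1 y > 0" "N2 y > 0" "N3 y > 0"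
  shows "((\<lambda>n. Mf (x (s n))) \<longlongrightarrow> Mf y) sequentially" "\<And>t. t > 0 \<Longrightarrow> Mf (x t) \<ge> Mf y"
proof -
  have y: "y \<in> omega_limit x" using assms unfolding omega_limit_def by auto
  have H: "Hc y \<noteq> 0" using omega_H[OF y assms(3-5)] by simp
  show lim: "((\<lambda>n. Mf (x (s n))) \<longlongrightarrow> Mf y) sequentially"
    by (rule isCont_tendsto_compose[OF isCont_Mf[OF H] assms(2)])
  fix t :: real assume t: "t > 0"
  have "eventually (\<lambda>n. s n \<ge> t) sequentially"
    using assms(1) by (simp add: filterlim_at_top)
  then have "eventually (\<lambda>n. Mf (x (s n)) \<le> Mf (x t)) sequentially"
    by eventually_elim (rule M_mono[OF t])
  then show "Mf (x t) \<ge> Mf y"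
    using lim by (metis tendsto_upperbound trivial_limit_sequentially)
qed

lemma window:
  fixes g g' :: "real \<Rightarrow> real" and Psi :: "real^7 \<Rightarrow> real"
  assumes s: "filterlim s at_top sequentially" "((\<lambda>n. x (s n)) \<longlongrightarrow> z) sequentially"
    and Psi: "isCont Psi z" "Psi z > 0" and r0: "r0 > 0"
    and dg: "\<And>t. t > 0 \<Longrightarrow> dist (x t) z < r0 \<Longrightarrow> (g has_real_derivative g' t) (at t) \<and> g' t \<le> - Psi (x t)"
  shows "\<exists>\<delta>>0. eventually (\<lambda>n. s n > 0 \<and> g (s n + \<delta>) \<le> g (s n) - \<delta> * Psi z / 2 \<and> dist (x (s n + \<delta>)) z < r0) sequentially"
proof -
  obtain r1 where r1: "r1 > 0" "\<forall>\<zeta>. dist \<zeta> z < r1 \<longrightarrow> Psi \<zeta> > Psi z / 2"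
    using cont_nbhd[OF Psi(1), of "Psi z / 2"] Psi(2) by auto
  define r where "r = min r0 r1"
  have r: "r > 0" "r \<le> r0" "r \<le> r1" using r0 r1 by (auto simp: r_def)
  define \<delta> where "\<delta> = r / (2 * BB + 2)"
  have \<delta>: "\<delta> > 0" "BB * \<delta> < r / 2" using r BB(1) by (auto simp: \<delta>_def field_simps)
  have e1: "eventually (\<lambda>n. s n > 0) sequentially"
    using s(1) by (simp add: filterlim_at_top_dense)
  have e2: "eventually (\<lambda>n. dist (x (s n)) z < r / 2) sequentially"
  proof -
    have "r / 2 > 0" using r by simp
    then show ?thesis using s(2) unfolding tendsto_iff by blast
  qed
  have "eventually (\<lambda>n. s n > 0 \<and> g (s n + \<delta>) \<le> g (s n) - \<delta> * Psi z / 2 \<and> dist (x (s n + \<delta>)) z < r0) sequentially"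
    using e1 e2
  proof eventually_elim
    case (elim n)
    let ?a = "s n"
    have close: "dist (x t) z < r" if "?a \<le> t" "t \<le> ?a + \<delta>" for t
    proof -
      have "norm (x t - x ?a) \<le> BB * (t - ?a)" using lip[of ?a t] that elim by auto
      also have "\<dots> \<le> BB * \<delta>" using that BB(1) by (intro mult_left_mono) auto
      finally have "dist (x t) (x ?a) < r / 2" using \<delta> by (simp add: dist_norm)
      then show ?thesis using elim(2) dist_triangle[of "x t" z "x ?a"] by linarith
    qed
    have "(\<lambda>t. g t + Psi z / 2 * t) (?a + \<delta>) \<le> (\<lambda>t. g t + Psi z / 2 * t) ?a"
    proof (rule DERIV_nonpos_imp_nonincreasing[where f="\<lambda>t. g t + Psi z / 2 * t"])
      show "?a \<le> ?a + \<delta>" using \<delta> by simp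
      fix t assume t: "?a \<le> t" "t \<le> ?a + \<delta>"
      have c: "dist (x t) z < r" by (rule close[OF t])
      have tp: "t > 0" using t elim by linarith
      from dg[OF tp] c r have d: "(g has_real_derivative g' t) (at t)" "g' t \<le> - Psi (x t)" by auto
      have "Psi (x t) > Psi z / 2" using r1(2) c r by auto
      then show "\<exists>y. ((\<lambda>t. g t + Psi z / 2 * t) has_real_derivative y) (at t) \<and> y \<le> 0"
        using d by (intro exI[of _ "g' t + Psi z / 2"]) (auto intro!: derivative_eq_intros)
    qed
    then have "g (?a + \<delta>) \<le> g ?a - \<delta> * Psi z / 2" by (simp add: algebra_simps add_divide_distrib)
    moreover have "dist (x (?a + \<delta>)) z < r0" using close[of "?a + \<delta>"] \<delta> r by auto
    ultimately show ?case using elim by auto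
  qed
  then show ?thesis using \<delta> by blast
qed

end


lemma key_ineq:
  fixes c1 \<gamma> \<epsilon> X q U AP Sb Ph :: real
  assumes c1: "c1 > 0" and g: "\<gamma> > 0" and X: "X \<ge> 0"
    and eps: "\<epsilon> = c1 * \<gamma> / (9 * (X ^ 2 + 1))"
    and U: "U \<ge> 0" "U ^ 2 \<le> 9 * q"
    and AP: "AP \<ge> - (X * U)" and Sb: "Sb > \<gamma> / 2" and Ph: "Ph \<ge> c1 * q"
  shows "- Ph - \<epsilon> * (AP + Sb) \<le> - (\<epsilon> * \<gamma> / 4)"
proof -
  have den: "9 * (X ^ 2 + 1) > 0" by (smt (verit) zero_le_power2)
  have epos: "\<epsilon> > 0" unfolding eps using c1 g den by (intro divide_pos_pos mult_pos_pos) auto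
  have eX: "\<epsilon> * X ^ 2 \<le> c1 * \<gamma> / 9"
  proof -
    have "\<epsilon> * X ^ 2 = c1 * \<gamma> / 9 * (X ^ 2 / (X ^ 2 + 1))" unfolding eps by (simp add: field_simps)
    also have "\<dots> \<le> c1 * \<gamma> / 9 * 1"
    proof (rule mult_left_mono)
      have "X ^ 2 \<le> X ^ 2 + 1" by simp
      moreover have "X ^ 2 + 1 > 0" by (smt (verit) zero_le_power2)
      ultimately show "X ^ 2 / (X ^ 2 + 1) \<le> 1" by (simp add: divide_le_eq_1)
    qed (use c1 g in auto)
    finally show ?thesis by simp
  qed
  have sq: "(c1 * U / 9 - \<epsilon> * X / 2) ^ 2 \<ge> 0" by simp
  have e1: "c1 / 9 * (c1 * U ^ 2 / 9 - \<epsilon> * X * U + \<epsilon> * \<gamma> / 4)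
      = (c1 * U / 9 - \<epsilon> * X / 2) ^ 2 + \<epsilon> * (c1 * \<gamma> / 36 - \<epsilon> * X ^ 2 / 4)"
    by (simp add: power2_eq_square algebra_simps)
  have "\<epsilon> * (c1 * \<gamma> / 36 - \<epsilon> * X ^ 2 / 4) \<ge> 0"
    using epos eX by (intro mult_nonneg_nonneg) auto
  then have "c1 / 9 * (c1 * U ^ 2 / 9 - \<epsilon> * X * U + \<epsilon> * \<gamma> / 4) \<ge> 0" using e1 sq by linarith
  then have main: "c1 * U ^ 2 / 9 - \<epsilon> * X * U + \<epsilon> * \<gamma> / 4 \<ge> 0" using c1
    by (simp add: zero_le_mult_iff)
  have "c1 * (U ^ 2 / 9) \<le> c1 * q" using U(2) c1 by (intro mult_left_mono) auto
  then have "Ph \<ge> c1 * U ^ 2 / 9" using Ph by simp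
  moreover have "\<epsilon> * AP \<ge> - (\<epsilon> * X * U)" using AP epos
    by (metis mult_left_mono minus_mult_right mult.assoc less_imp_le)
  moreover have "\<epsilon> * Sb \<ge> \<epsilon> * \<gamma> / 2" using Sb epos by (simp add: less_imp_le mult_left_mono)
  ultimately show ?thesis using main by (simp add: algebra_simps)
qed

lemma scurv_diff: "Scurv a b c - Scurv b c a = (a - b) * (a + b - c)"
  unfolding Scurv_def by (simp add: power2_eq_square algebra_simps divide_simps)

lemma curv_nonzero:
  fixes n1 n2 n3 h :: real
  assumes n: "n1 > 0" "n2 > 0" "n3 > 0"
    and C: "h ^ 2 + (n1 * n2 + n1 * n3 + n2 * n3) / 6 = 1"
    and O: "n1 ^ 2 + n2 ^ 2 + n3 ^ 2 = 12"
  shows "(Scurv n1 n2 n3) ^ 2 + (Scurv n2 n3 n1) ^ 2 + (Scurv n3 n1 n2) ^ 2 > 0"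
proof (rule ccontr)
  assume neg: "\<not> ?thesis"
  then have z: "Scurv n1 n2 n3 = 0" "Scurv n2 n3 n1 = 0" "Scurv n3 n1 n2 = 0"
  proof -
    have p: "Scurv n1 n2 n3 ^ 2 \<ge> 0" "Scurv n2 n3 n1 ^ 2 \<ge> 0" "Scurv n3 n1 n2 ^ 2 \<ge> 0" by simp_all
    then have "Scurv n1 n2 n3 ^ 2 = 0" "Scurv n2 n3 n1 ^ 2 = 0" "Scurv n3 n1 n2 ^ 2 = 0"
      using neg by linarith+
    then show "Scurv n1 n2 n3 = 0" "Scurv n2 n3 n1 = 0" "Scurv n3 n1 n2 = 0" by simp_all
  qed
  have d1: "(n1 - n2) * (n1 + n2 - n3) = 0" using scurv_diff[of n1 n2 n3] z by simp
  have d2: "(n2 - n3) * (n2 + n3 - n1) = 0" using scurv_diff[of n2 n3 n1] z by simp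
  have d3: "(n3 - n1) * (n3 + n1 - n2) = 0" using scurv_diff[of n3 n1 n2] z by simp
  have e12: "n1 = n2"
  proof (rule ccontr)
    assume "n1 \<noteq> n2"
    then have "n3 = n1 + n2" using d1 by simp
    then have "(n2 - n3) * (n2 + n3 - n1) \<noteq> 0" using n by simp
    then show False using d2 by simp
  qed
  have e23: "n2 = n3"
  proof (rule ccontr)
    assume "n2 \<noteq> n3"
    then have "n1 = n2 + n3" using d2 by simp
    then show False using e12 n by simp
  qed
  have "n1 ^ 2 = 4" using O e12 e23 by simp
  then have "h ^ 2 + 2 = 1" using C e12 e23 by (simp add: power2_eq_square)
  moreover have "h ^ 2 \<ge> 0" by simp
  ultimately show False by linarith
qed

context traj begin

lemma omega_q:
  assumes y: "y \<in> omega_limit x" and n: "N1 y > 0" "N2 y > 0" "N3 y > 0"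
  shows "qb w y = 0"
proof (rule ccontr)
  assume q0: "qb w y \<noteq> 0"
  obtain s where s: "filterlim s at_top sequentially" "((\<lambda>n. x (s n)) \<longlongrightarrow> y) sequentially"
    using y by (auto simp: omega_limit_def)
  have "y \<in> Kset" by (rule omega_K[OF y])
  then have "Omg y \<ge> 0" by (simp add: Kset_def admissible_def)
  then have q: "qb w y > 0" using qb_nonneg q0 by force
  have H: "Hc y > 0" by (rule omega_H[OF y n])
  have Ppos: "Phi y > 0" unfolding Phi_def using q H n by simp
  obtain \<delta> where d: "\<delta> > 0" and ev: "eventually (\<lambda>n. s n > 0 \<and> Mf (x (s n + \<delta>)) \<le> Mf (x (s n)) - \<delta> * Phi y / 2 \<and> dist (x (s n + \<delta>)) y < 1) sequentially"
    using window[OF s isCont_Phi Ppos, of 1 "\<lambda>t. Mf (x t)" "\<lambda>t. - Phi (x t)"] H dM by auto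
  have "eventually (\<lambda>n. Mf (x (s n)) \<ge> Mf y + \<delta> * Phi y / 2) sequentially"
    using ev
  proof eventually_elim
    case (elim n)
    then have "Mf (x (s n + \<delta>)) \<ge> Mf y" using omega_M(2)[OF s n, of "s n + \<delta>"] d by auto
    then show ?case using elim by linarith
  qed
  then have "Mf y \<ge> Mf y + \<delta> * Phi y / 2"
    using omega_M(1)[OF s n] by (metis tendsto_lowerbound trivial_limit_sequentially)
  then show False using mult_pos_pos[OF d Ppos] by linarith
qed

end


lemma abs3_sq: fixes a b c :: real shows "(\<bar>a\<bar> + \<bar>b\<bar> + \<bar>c\<bar>) ^ 2 \<le> 3 * (a ^ 2 + b ^ 2 + c ^ 2)"
proof -
  have "3 * (a ^ 2 + b ^ 2 + c ^ 2) - (\<bar>a\<bar> + \<bar>b\<bar> + \<bar>c\<bar>) ^ 2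
      = (\<bar>a\<bar> - \<bar>b\<bar>) ^ 2 + (\<bar>b\<bar> - \<bar>c\<bar>) ^ 2 + (\<bar>a\<bar> - \<bar>c\<bar>) ^ 2"
  proof -
    have e: "a ^ 2 = \<bar>a\<bar> ^ 2" "b ^ 2 = \<bar>b\<bar> ^ 2" "c ^ 2 = \<bar>c\<bar> ^ 2" by simp_all
    have g: "3 * (p ^ 2 + q ^ 2 + r ^ 2) - (p + q + r) ^ 2 = (p - q) ^ 2 + (q - r) ^ 2 + (p - r) ^ 2" for p q r :: real
      by algebra
    show ?thesis unfolding e by (rule g)
  qed
  moreover have "(\<bar>a\<bar> - \<bar>b\<bar>) ^ 2 + (\<bar>b\<bar> - \<bar>c\<bar>) ^ 2 + (\<bar>a\<bar> - \<bar>c\<bar>) ^ 2 \<ge> 0" by simp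
  ultimately show ?thesis by linarith
qed

context traj begin

lemma q_zero_S:
  assumes K: "z \<in> Kset" and q: "qb w z = 0"
  shows "S1 z = 0" "S2 z = 0" "S3 z = 0" "Omg z = 0"
proof -
  have O: "Omg z \<ge> 0" using K by (simp add: Kset_def admissible_def)
  have c: "(1 + 3 * w) / 2 > 0" using w1 by simp
  have Sg: "Sig2 z \<ge> 0" unfolding Sig2_def by simp
  have "2 * Sig2 z + (1 + 3 * w) / 2 * Omg z = 0" using q by (simp add: qb_def)
  moreover have "(1 + 3 * w) / 2 * Omg z \<ge> 0" using c O by simp
  ultimately have z1: "Sig2 z = 0" and z2: "(1 + 3 * w) / 2 * Omg z = 0" using Sg by linarith+
  from z2 c show "Omg z = 0" by simp
  have p: "S1 z ^ 2 \<ge> 0" "S2 z ^ 2 \<ge> 0" "S3 z ^ 2 \<ge> 0" by simp_all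
  have "S1 z ^ 2 + S2 z ^ 2 + S3 z ^ 2 = 0" using z1 by (simp add: Sig2_def)
  then have "S1 z ^ 2 = 0" "S2 z ^ 2 = 0" "S3 z ^ 2 = 0" using p by linarith+
  then show "S1 z = 0" "S2 z = 0" "S3 z = 0" by simp_all
qed

lemma omega_VII:
  assumes y: "y \<in> omega_limit x"
  shows "N1 y = 0 \<or> N2 y = 0 \<or> N3 y = 0"
proof (rule ccontr)
  assume neg: "\<not> ?thesis"
  have yK: "y \<in> Kset" by (rule omega_K[OF y])
  have n: "N1 y > 0" "N2 y > 0" "N3 y > 0" using neg yK by (auto simp: Kset_def)
  obtain s where s: "filterlim s at_top sequentially" "((\<lambda>n. x (s n)) \<longlongrightarrow> y) sequentially"
    using y by (auto simp: omega_limit_def)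
  have H: "Hc y > 0" by (rule omega_H[OF y n])
  have qy: "qb w y = 0" by (rule omega_q[OF y n])
  note Sy = q_zero_S[OF yK qy]
  have adm: "admissible y" using yK by (simp add: Kset_def)
  have O12: "N1 y ^ 2 + N2 y ^ 2 + N3 y ^ 2 = 12" using Sy(4) Sy(1-3) by (simp add: Omg_def Sig2_def)
  define b1 where "b1 = Scurv (N1 y) (N2 y) (N3 y)"
  define b2 where "b2 = Scurv (N2 y) (N3 y) (N1 y)"
  define b3 where "b3 = Scurv (N3 y) (N1 y) (N2 y)"
  define \<gamma> where "\<gamma> = b1 ^ 2 + b2 ^ 2 + b3 ^ 2"
  have gpos: "\<gamma> > 0" unfolding \<gamma>_def b1_def b2_def b3_def
    by (rule curv_nonzero[OF n _ O12, of "Hc y"]) (use adm in \<open>simp add: admissible_def\<close>)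
  define \<beta> where "\<beta> = \<bar>b1\<bar> + \<bar>b2\<bar> + \<bar>b3\<bar>"
  have bb: "\<bar>b1\<bar> \<le> \<beta>" "\<bar>b2\<bar> \<le> \<beta>" "\<bar>b3\<bar> \<le> \<beta>" "\<beta> \<ge> 0" by (auto simp: \<beta>_def)
  define R where "R \<zeta> = 3 * Mf \<zeta> / Hc \<zeta>" for \<zeta>
  define Sb where "Sb \<zeta> = Scurv (N1 \<zeta>) (N2 \<zeta>) (N3 \<zeta>) * b1 + Scurv (N2 \<zeta>) (N3 \<zeta>) (N1 \<zeta>) * b2 + Scurv (N3 \<zeta>) (N1 \<zeta>) (N2 \<zeta>) * b3" for \<zeta>
  define A where "A \<zeta> = (2 - qb w \<zeta>) * Hc \<zeta> - Fb \<zeta>" for \<zeta>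
  define P where "P \<zeta> = S1 \<zeta> * b1 + S2 \<zeta> * b2 + S3 \<zeta> * b3" for \<zeta>
  define KA where "KA = \<bar>A y\<bar> + 1"
  have KA: "KA \<ge> 0" by (simp add: KA_def)
  have Ry: "R y > 0" unfolding R_def Mf_def using n H by simp
  have Sby: "Sb y = \<gamma>" unfolding Sb_def \<gamma>_def b1_def b2_def b3_def by (simp add: power2_eq_square)
  have cR: "isCont R y" unfolding R_def using isCont_Mf[of y] H
    unfolding Hc_def by (intro continuous_intros) auto
  have cSb: "isCont Sb y" unfolding Sb_def Scurv_def N1_def N2_def N3_def by (intro continuous_intros) auto
  have "continuous_on UNIV A"
    unfolding A_def qb_def Omg_def Sig2_def Fb_def Hc_def S1_def S2_def S3_def N1_def N2_def N3_def
    by (intro continuous_intros) auto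
  then have "isCont A y" by (simp add: continuous_on_eq_continuous_at)
  then have cA: "isCont (\<lambda>\<zeta>. KA - \<bar>A \<zeta>\<bar>) y"
    by (intro continuous_intros)
  have cN: "isCont N1 y" "isCont N2 y" "isCont N3 y" unfolding N1_def N2_def N3_def
    by (intro continuous_intros)+
  obtain r1 where r1: "r1 > 0" "\<forall>z. dist z y < r1 \<longrightarrow> R z > R y / 2"
    using cont_nbhd[OF cR, of "R y / 2"] Ry by auto
  obtain r2 where r2: "r2 > 0" "\<forall>z. dist z y < r2 \<longrightarrow> Sb z > \<gamma> / 2"
    using cont_nbhd[OF cSb, of "\<gamma> / 2"] Sby gpos by auto
  obtain r3 where r3: "r3 > 0" "\<forall>z. dist z y < r3 \<longrightarrow> KA - \<bar>A z\<bar> > 0"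
    using cont_nbhd[OF cA, of 0] by (auto simp: KA_def)
  obtain r4 where r4: "r4 > 0" "\<forall>z. dist z y < r4 \<longrightarrow> N1 z > N1 y / 2"
    using cont_nbhd[OF cN(1), of "N1 y / 2"] n by auto
  obtain r5 where r5: "r5 > 0" "\<forall>z. dist z y < r5 \<longrightarrow> N2 z > N2 y / 2"
    using cont_nbhd[OF cN(2), of "N2 y / 2"] n by auto
  obtain r6 where r6: "r6 > 0" "\<forall>z. dist z y < r6 \<longrightarrow> N3 z > N3 y / 2"
    using cont_nbhd[OF cN(3), of "N3 y / 2"] n by auto
  define r0 where "r0 = min r1 (min r2 (min r3 (min r4 (min r5 r6))))"
  have r0: "r0 > 0" "r0 \<le> r1" "r0 \<le> r2" "r0 \<le> r3" "r0 \<le> r4" "r0 \<le> r5" "r0 \<le> r6"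
    using r1 r2 r3 r4 r5 r6 by (auto simp: r0_def)
  define c1 where "c1 = R y / 2"
  have c1: "c1 > 0" using Ry by (simp add: c1_def)
  define X where "X = KA * \<beta>"
  have X: "X \<ge> 0" using KA bb by (simp add: X_def)
  define \<epsilon> where "\<epsilon> = c1 * \<gamma> / (9 * (X ^ 2 + 1))"
  have epos: "\<epsilon> > 0"
  proof -
    have "9 * (X ^ 2 + 1) > 0" by (smt (verit) zero_le_power2)
    then show ?thesis unfolding \<epsilon>_def using c1 gpos by (intro divide_pos_pos mult_pos_pos) auto
  qed
  define g where "g t = Mf (x t) - \<epsilon> * P (x t)" for t
  define g' where "g' t = - Phi (x t) - \<epsilon> * (A (x t) * P (x t) + Sb (x t))" for t
  have dP: "((\<lambda>t. P (x t)) has_real_derivative A (x t) * P (x t) + Sb (x t)) (at t)" if t: "t > 0" for t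
  proof -
    have "((\<lambda>t. P (x t)) has_real_derivative S1 (vfield w (x t)) * b1 + S2 (vfield w (x t)) * b2 + S3 (vfield w (x t)) * b3) (at t)"
      unfolding P_def by (auto intro!: derivative_eq_intros cda[OF t])
    then show ?thesis by (rule DERIV_cong) (simp add: vf A_def P_def Sb_def algebra_simps)
  qed
  have dg: "(g has_real_derivative g' t) (at t) \<and> g' t \<le> - (\<lambda>_. \<epsilon> * \<gamma> / 4) (x t)"
    if t: "t > 0" and dt: "dist (x t) y < r0" for t
  proof
    show "(g has_real_derivative g' t) (at t)"
      unfolding g_def[abs_def] g'_def using dM[OF t] dP[OF t]
      by (auto intro!: derivative_eq_intros)
    let ?z = "x t"
    have t0: "t \<ge> 0" using t by simp
    have Hz: "Hc ?z > 0" by (rule Hpos[OF t0])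
    have Oz: "Omg ?z \<ge> 0" by (rule Omg_nonneg[OF t0])
    have qz: "qb w ?z \<ge> 0" by (rule qb_nonneg[OF Oz])
    have PhiR: "Phi ?z = qb w ?z * R ?z" unfolding Phi_def R_def Mf_def using Hz
      by (simp add: field_simps eval_nat_numeral)
    have Rz: "R ?z > c1" using r1(2) dt r0 by (auto simp: c1_def)
    have Ph: "Phi ?z \<ge> c1 * qb w ?z" unfolding PhiR using Rz qz
      by (metis mult.commute mult_right_mono less_imp_le)
    have qS: "qb w ?z \<ge> (S1 ?z ^ 2 + S2 ?z ^ 2 + S3 ?z ^ 2) / 3"
    proof -
      have "(1 + 3 * w) / 2 * Omg ?z \<ge> 0" using w1 Oz by simp
      moreover have "qb w ?z = (S1 ?z ^ 2 + S2 ?z ^ 2 + S3 ?z ^ 2) / 3 + (1 + 3 * w) / 2 * Omg ?z"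
        unfolding qb_def Sig2_def by simp
      ultimately show ?thesis by linarith
    qed
    define U where "U = \<bar>S1 ?z\<bar> + \<bar>S2 ?z\<bar> + \<bar>S3 ?z\<bar>"
    have U: "U \<ge> 0" "U ^ 2 \<le> 9 * qb w ?z"
      using abs3_sq[of "S1 ?z" "S2 ?z" "S3 ?z"] qS by (auto simp: U_def)
    have Pb: "\<bar>P ?z\<bar> \<le> \<beta> * U"
    proof -
      have "\<bar>P ?z\<bar> \<le> \<bar>S1 ?z\<bar> * \<bar>b1\<bar> + \<bar>S2 ?z\<bar> * \<bar>b2\<bar> + \<bar>S3 ?z\<bar> * \<bar>b3\<bar>"
        unfolding P_def abs_mult[symmetric]
        using abs_triangle_ineq[of "S1 ?z * b1 + S2 ?z * b2" "S3 ?z * b3"] abs_triangle_ineq[of "S1 ?z * b1" "S2 ?z * b2"]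
        by linarith
      also have "\<dots> \<le> \<bar>S1 ?z\<bar> * \<beta> + \<bar>S2 ?z\<bar> * \<beta> + \<bar>S3 ?z\<bar> * \<beta>"
        using bb by (intro add_mono mult_left_mono) auto
      finally show ?thesis by (simp add: U_def algebra_simps)
    qed
    have "dist ?z y < r3" using dt r0(4) by linarith
    then have "KA - \<bar>A ?z\<bar> > 0" using r3(2) by blast
    then have Az: "\<bar>A ?z\<bar> \<le> KA" by linarith
    have AP: "A ?z * P ?z \<ge> - (X * U)"
    proof -
      have "\<bar>A ?z * P ?z\<bar> \<le> KA * (\<beta> * U)"
        unfolding abs_mult using Az Pb by (intro mult_mono) auto
      then show ?thesis unfolding X_def by (simp add: algebra_simps abs_le_iff)
    qed
    have Sbz: "Sb ?z > \<gamma> / 2" using r2(2) dt r0 by auto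
    show "g' t \<le> - (\<lambda>_. \<epsilon> * \<gamma> / 4) (x t)"
      unfolding g'_def using key_ineq[OF c1 gpos X \<epsilon>_def U AP Sbz Ph] by simp
  qed
  obtain \<delta> where d: "\<delta> > 0" and ev: "eventually (\<lambda>n. s n > 0 \<and> g (s n + \<delta>) \<le> g (s n) - \<delta> * (\<epsilon> * \<gamma> / 4) / 2 \<and> dist (x (s n + \<delta>)) y < r0) sequentially"
    using window[OF s, of "\<lambda>_. \<epsilon> * \<gamma> / 4" r0 g g'] dg r0(1) epos gpos by auto
  define zz where "zz n = x (max 0 (s n) + \<delta>)" for n
  have zzK: "\<forall>n. zz n \<in> Kset" using d by (auto simp: zz_def intro!: xK)
  obtain y' \<phi> where y': "y' \<in> Kset" "strict_mono (\<phi> :: nat \<Rightarrow> nat)" "(zz \<circ> \<phi>) \<longlonglongrightarrow> y'"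
    using seq_compactE[OF compact_imp_seq_compact[OF Kcompact] zzK] by blast
  define t' where "t' n = max 0 (s (\<phi> n)) + \<delta>" for n
  have sphi: "filterlim (\<lambda>n. s (\<phi> n)) at_top sequentially"
    using filterlim_compose[OF s(1) filterlim_subseq[OF y'(2)]] by (simp add: o_def)
  have t'lim: "filterlim t' at_top sequentially"
    unfolding filterlim_at_top
  proof
    fix Z :: real
    have "eventually (\<lambda>n. s (\<phi> n) \<ge> Z) sequentially" using sphi by (simp add: filterlim_at_top)
    then show "eventually (\<lambda>n. t' n \<ge> Z) sequentially"
      by eventually_elim (use d in \<open>auto simp: t'_def\<close>)
  qed
  have xt': "((\<lambda>n. x (t' n)) \<longlongrightarrow> y') sequentially"
    using y'(3) by (simp add: o_def zz_def t'_def)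
  have y'om: "y' \<in> omega_limit x" unfolding omega_limit_def using t'lim xt' by blast
  have ev': "eventually (\<lambda>n. s (\<phi> n) > 0 \<and> g (s (\<phi> n) + \<delta>) \<le> g (s (\<phi> n)) - \<delta> * (\<epsilon> * \<gamma> / 4) / 2 \<and> dist (x (s (\<phi> n) + \<delta>)) y < r0) sequentially"
    by (rule ev_subseq[OF ev y'(2)])
  have evd: "eventually (\<lambda>n. dist (x (t' n)) y < r0) sequentially"
    using ev' by eventually_elim (auto simp: t'_def)
  have "N1 y' \<ge> N1 y / 2"
  proof -
    have "eventually (\<lambda>n. N1 (x (t' n)) \<ge> N1 y / 2) sequentially"
    proof (rule eventually_mono[OF evd])
      fix n assume "dist (x (t' n)) y < r0"
      then have "dist (x (t' n)) y < r4" using r0(5) by linarith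
      then show "N1 (x (t' n)) \<ge> N1 y / 2" using r4(2) by (meson less_imp_le)
    qed
    moreover have "((\<lambda>n. N1 (x (t' n))) \<longlongrightarrow> N1 y') sequentially"
      unfolding N1_def by (intro tendsto_intros xt')
    ultimately show ?thesis by (metis tendsto_lowerbound trivial_limit_sequentially)
  qed
  moreover have "N2 y' \<ge> N2 y / 2"
  proof -
    have "eventually (\<lambda>n. N2 (x (t' n)) \<ge> N2 y / 2) sequentially"
    proof (rule eventually_mono[OF evd])
      fix n assume "dist (x (t' n)) y < r0"
      then have "dist (x (t' n)) y < r5" using r0(6) by linarith
      then show "N2 (x (t' n)) \<ge> N2 y / 2" using r5(2) by (meson less_imp_le)
    qed
    moreover have "((\<lambda>n. N2 (x (t' n))) \<longlongrightarrow> N2 y') sequentially"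
      unfolding N2_def by (intro tendsto_intros xt')
    ultimately show ?thesis by (metis tendsto_lowerbound trivial_limit_sequentially)
  qed
  moreover have "N3 y' \<ge> N3 y / 2"
  proof -
    have "eventually (\<lambda>n. N3 (x (t' n)) \<ge> N3 y / 2) sequentially"
    proof (rule eventually_mono[OF evd])
      fix n assume "dist (x (t' n)) y < r0"
      then have "dist (x (t' n)) y < r6" using r0(7) by linarith
      then show "N3 (x (t' n)) \<ge> N3 y / 2" using r6(2) by (meson less_imp_le)
    qed
    moreover have "((\<lambda>n. N3 (x (t' n))) \<longlongrightarrow> N3 y') sequentially"
      unfolding N3_def by (intro tendsto_intros xt')
    ultimately show ?thesis by (metis tendsto_lowerbound trivial_limit_sequentially)
  qed
  ultimately have n': "N1 y' > 0" "N2 y' > 0" "N3 y' > 0" using n by auto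
  note Sy' = q_zero_S[OF y'(1) omega_q[OF y'om n']]
  have L1: "((\<lambda>n. P (x (t' n))) \<longlongrightarrow> 0) sequentially"
  proof -
    have "((\<lambda>n. P (x (t' n))) \<longlongrightarrow> P y') sequentially"
      unfolding P_def S1_def S2_def S3_def by (intro tendsto_intros xt')
    then show ?thesis using Sy' by (simp add: P_def)
  qed
  have xs': "((\<lambda>n. x (s (\<phi> n))) \<longlongrightarrow> y) sequentially"
    using LIMSEQ_subseq_LIMSEQ[OF s(2) y'(2)] by (simp add: o_def)
  have L2: "((\<lambda>n. P (x (s (\<phi> n)))) \<longlongrightarrow> 0) sequentially"
  proof -
    have "((\<lambda>n. P (x (s (\<phi> n)))) \<longlongrightarrow> P y) sequentially"
      unfolding P_def S1_def S2_def S3_def by (intro tendsto_intros xs')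
    then show ?thesis using Sy by (simp add: P_def)
  qed
  have L3: "((\<lambda>n. Mf (x (s (\<phi> n)))) \<longlongrightarrow> Mf y) sequentially"
    by (rule omega_M(1)[OF sphi xs' n])
  have Xlim: "((\<lambda>n. Mf (x (s (\<phi> n))) - \<epsilon> * P (x (s (\<phi> n))) + \<epsilon> * P (x (t' n))) \<longlongrightarrow> Mf y - \<epsilon> * 0 + \<epsilon> * 0) sequentially"
    by (intro tendsto_intros L1 L2 L3)
  have "eventually (\<lambda>n. Mf (x (s (\<phi> n))) - \<epsilon> * P (x (s (\<phi> n))) + \<epsilon> * P (x (t' n)) \<ge> Mf y + \<delta> * (\<epsilon> * \<gamma> / 4) / 2) sequentially"
    using ev'
  proof eventually_elim
    case (elim n)
    have sp: "s (\<phi> n) > 0" using elim by blast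
    then have tt: "t' n = s (\<phi> n) + \<delta>" by (simp add: t'_def)
    have tp: "t' n > 0" using tt sp d by linarith
    have "Mf (x (t' n)) \<ge> Mf y" by (rule omega_M(2)[OF s n tp])
    moreover have "g (s (\<phi> n) + \<delta>) \<le> g (s (\<phi> n)) - \<delta> * (\<epsilon> * \<gamma> / 4) / 2"
      using elim by blast
    then have "Mf (x (t' n)) - \<epsilon> * P (x (t' n)) \<le> Mf (x (s (\<phi> n))) - \<epsilon> * P (x (s (\<phi> n))) - \<delta> * (\<epsilon> * \<gamma> / 4) / 2"
      unfolding g_def tt .
    ultimately show ?case by linarith
  qed
  then have "Mf y - \<epsilon> * 0 + \<epsilon> * 0 \<ge> Mf y + \<delta> * (\<epsilon> * \<gamma> / 4) / 2"
    by (rule tendsto_lowerbound[OF Xlim]) simp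
  moreover have "\<delta> * (\<epsilon> * \<gamma> / 4) / 2 > 0" using d epos gpos by simp
  ultimately show False by linarith
qed

end


lemma approx:
  fixes h a1 a2 a3 n1 n2 e :: real
  assumes s: "a1 + a2 + a3 = 0" and h: "h ^ 2 + n1 * n2 / 6 = 1"
    and n: "n1 \<ge> 0" "n2 \<ge> 0"
    and O: "1 - (a1 ^ 2 + a2 ^ 2 + a3 ^ 2) / 6 - (n1 ^ 2 + n2 ^ 2) / 12 \<ge> 0"
    and e: "0 < e" "e \<le> 1 / 2"
  shows "(1 - e) * a1 + (1 - e) * a2 + (1 - e) * a3 = 0"
    "(1 - e) * n1 + e / 10 > 0" "(1 - e) * n2 + e / 10 > 0"
    "((1 - e) * n1 + e / 10) * ((1 - e) * n2 + e / 10) < 6"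
    "1 - (((1 - e) * a1) ^ 2 + ((1 - e) * a2) ^ 2 + ((1 - e) * a3) ^ 2) / 6
       - (((1 - e) * n1 + e / 10) ^ 2 + ((1 - e) * n2 + e / 10) ^ 2) / 12 \<ge> 0"
proof -
  have "(1 - e) * a1 + (1 - e) * a2 + (1 - e) * a3 = (1 - e) * (a1 + a2 + a3)" by (simp add: algebra_simps)
  then show "(1 - e) * a1 + (1 - e) * a2 + (1 - e) * a3 = 0" using s by simp
  have e1: "1 - e > 0" using e by simp
  show "(1 - e) * n1 + e / 10 > 0" using e1 n e by (simp add: add_nonneg_pos)
  show "(1 - e) * n2 + e / 10 > 0" using e1 n e by (simp add: add_nonneg_pos)
  have "h ^ 2 \<ge> 0" by simp
  then have P: "n1 * n2 \<le> 6" using h by linarith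
  have sq: "(n1 + n2) ^ 2 \<le> 2 * (n1 ^ 2 + n2 ^ 2)"
  proof -
    have "2 * (n1 ^ 2 + n2 ^ 2) - (n1 + n2) ^ 2 = (n1 - n2) ^ 2" by algebra
    moreover have "(n1 - n2) ^ 2 \<ge> 0" by simp
    ultimately show ?thesis by linarith
  qed
  have a2: "a1 ^ 2 + a2 ^ 2 + a3 ^ 2 \<ge> 0" by simp
  have lin: "B \<le> 12" if "1 - A / 6 - B / 12 \<ge> 0" "A \<ge> 0" for A B :: real using that by linarith
  have N12: "n1 ^ 2 + n2 ^ 2 \<le> 12" by (rule lin[OF O a2])
  have S5: "n1 + n2 \<le> 5"
  proof (rule ccontr)
    assume "\<not> n1 + n2 \<le> 5"
    then have "5 ^ 2 < (n1 + n2) ^ 2" by (intro power_strict_mono) auto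
    then show False using sq N12 by simp
  qed
  have expand: "((1 - e) * n1 + e / 10) * ((1 - e) * n2 + e / 10) = (1 - e) ^ 2 * (n1 * n2) + (1 - e) * (e / 10) * (n1 + n2) + e ^ 2 / 100"
    by (simp add: power2_eq_square field_simps)
  have t1: "(1 - e) ^ 2 * (n1 * n2) \<le> (1 - e) ^ 2 * 6" using P by (intro mult_left_mono) auto
  have t2: "(1 - e) * (e / 10) * (n1 + n2) \<le> (1 - e) * (e / 10) * 5" using S5 e1 e by (intro mult_left_mono) auto
  have "(1 - e) ^ 2 * 6 + (1 - e) * (e / 10) * 5 + e ^ 2 / 100 < 6"
  proof -
    have "(1 - e) ^ 2 * 6 + (1 - e) * (e / 10) * 5 + e ^ 2 / 100 = 6 - e * (23 / 2 - e * 551 / 100)"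
      by (simp add: power2_eq_square field_simps)
    moreover have "e * (23 / 2 - e * 551 / 100) > 0" using e by (intro mult_pos_pos) auto
    ultimately show ?thesis by linarith
  qed
  then show "((1 - e) * n1 + e / 10) * ((1 - e) * n2 + e / 10) < 6" using expand t1 t2 by linarith
  have cv: "((1 - e) * m + e / 10) ^ 2 \<le> (1 - e) * m ^ 2 + e / 100" for m
  proof -
    have "(1 - e) * m ^ 2 + e / 100 - ((1 - e) * m + e / 10) ^ 2 = e * (1 - e) * (m - 1 / 10) ^ 2"
      by (simp add: power2_eq_square field_simps)
    moreover have "e * (1 - e) * (m - 1 / 10) ^ 2 \<ge> 0" using e e1 by simp
    ultimately show ?thesis by linarith
  qed
  have ca: "((1 - e) * a) ^ 2 \<le> (1 - e) * a ^ 2" for a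
  proof -
    have "(1 - e) * (1 - e) \<le> (1 - e) * 1" using e e1 by (intro mult_left_mono) auto
    then have "(1 - e) ^ 2 * a ^ 2 \<le> (1 - e) * a ^ 2" by (intro mult_right_mono) (auto simp: power2_eq_square)
    then show ?thesis by (simp add: power_mult_distrib)
  qed
  have "(((1 - e) * a1) ^ 2 + ((1 - e) * a2) ^ 2 + ((1 - e) * a3) ^ 2) / 6
       + (((1 - e) * n1 + e / 10) ^ 2 + ((1 - e) * n2 + e / 10) ^ 2) / 12
     \<le> (1 - e) * ((a1 ^ 2 + a2 ^ 2 + a3 ^ 2) / 6 + (n1 ^ 2 + n2 ^ 2) / 12) + e / 600"
  proof -
    have "(1 - e) * ((a1 ^ 2 + a2 ^ 2 + a3 ^ 2) / 6 + (n1 ^ 2 + n2 ^ 2) / 12) + e / 600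
      = ((1 - e) * a1 ^ 2 + (1 - e) * a2 ^ 2 + (1 - e) * a3 ^ 2) / 6 + ((1 - e) * n1 ^ 2 + e / 100 + ((1 - e) * n2 ^ 2 + e / 100)) / 12"
      by (simp add: field_simps)
    moreover have gen: "(X1 + X2 + X3) / 6 + (X4 + X5) / 12 \<le> (Y1 + Y2 + Y3) / 6 + (Y4 + Y5) / 12"
      if "X1 \<le> Y1" "X2 \<le> Y2" "X3 \<le> Y3" "X4 \<le> Y4" "X5 \<le> Y5" for X1 X2 X3 X4 X5 Y1 Y2 Y3 Y4 Y5 :: real
      using that by (intro add_mono divide_right_mono) auto
    ultimately show ?thesis using gen[OF ca[of a1] ca[of a2] ca[of a3] cv[of n1] cv[of n2]] by simp
  qed
  also have "\<dots> \<le> (1 - e) * 1 + e / 600"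
  proof -
    have lin1: "A / 6 + B / 12 \<le> 1" if "1 - A / 6 - B / 12 \<ge> 0" for A B :: real using that by linarith
    show ?thesis using lin1[OF O] e1 by (intro add_right_mono mult_left_mono) auto
  qed
  also have "\<dots> \<le> 1" using e by simp
  finally show "1 - (((1 - e) * a1) ^ 2 + ((1 - e) * a2) ^ 2 + ((1 - e) * a3) ^ 2) / 6
       - (((1 - e) * n1 + e / 10) ^ 2 + ((1 - e) * n2 + e / 10) ^ 2) / 12 \<ge> 0" by linarith
qed

definition mk :: "real \<Rightarrow> real \<Rightarrow> real \<Rightarrow> real \<Rightarrow> real \<Rightarrow> real \<Rightarrow> real \<Rightarrow> real^7" where
  "mk h a b c p q r = (\<chi> i. if i = 0 then h else if i = 1 then a else if i = 2 then b else if i = 3 then c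
      else if i = 4 then p else if i = 5 then q else r)"

lemma mk_comp: "Hc (mk h a b c p q r) = h" "S1 (mk h a b c p q r) = a" "S2 (mk h a b c p q r) = b"
  "S3 (mk h a b c p q r) = c" "N1 (mk h a b c p q r) = p" "N2 (mk h a b c p q r) = q" "N3 (mk h a b c p q r) = r"
  by (simp_all add: mk_def Hc_def S1_def S2_def S3_def N1_def N2_def N3_def)

lemma mk_eta: "y = mk (Hc y) (S1 y) (S2 y) (S3 y) (N1 y) (N2 y) (N3 y)"
  unfolding vec_eq_iff mk_def Hc_def S1_def S2_def S3_def N1_def N2_def N3_def
  using exhaust_7 by auto

lemma tendsto_mk:
  assumes "(h \<longlongrightarrow> h0) F" "(a \<longlongrightarrow> a0) F" "(b \<longlongrightarrow> b0) F" "(c \<longlongrightarrow> c0) F"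
    "(p \<longlongrightarrow> p0) F" "(q \<longlongrightarrow> q0) F" "(r \<longlongrightarrow> r0) F"
  shows "((\<lambda>k. mk (h k) (a k) (b k) (c k) (p k) (q k) (r k)) \<longlongrightarrow> mk h0 a0 b0 c0 p0 q0 r0) F"
proof (rule vec_tendstoI)
  fix i :: 7
  show "((\<lambda>k. mk (h k) (a k) (b k) (c k) (p k) (q k) (r k) $ i) \<longlongrightarrow> mk h0 a0 b0 c0 p0 q0 r0 $ i) F"
    using exhaust_7[of i] assms by (auto simp: mk_def)
qed

definition ee :: "nat \<Rightarrow> real" where "ee k = inverse (real (Suc k)) / 2"

lemma ee: "0 < ee k" "ee k \<le> 1 / 2" "ee \<longlonglongrightarrow> 0"
proof -
  show "0 < ee k" by (simp add: ee_def)
  have "inverse (real (Suc k)) \<le> 1" by (simp add: inverse_le_1_iff)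
  then show "ee k \<le> 1 / 2" by (simp add: ee_def)
  show "ee \<longlonglongrightarrow> 0" unfolding ee_def[abs_def]
    using tendsto_divide[OF LIMSEQ_inverse_real_of_nat tendsto_const[of 2]] by simp
qed


lemma clos_12:
  assumes yK: "y \<in> Kset" and z: "N3 y = 0"
  shows "y \<in> closure B_N1N2"
proof -
  define h where "h = Hc y"
  define a1 where "a1 = S1 y"
  define a2 where "a2 = S2 y"
  define a3 where "a3 = S3 y"
  define n1 where "n1 = N1 y"
  define n2 where "n2 = N2 y"
  have adm: "admissible y" and nn: "n1 \<ge> 0" "n2 \<ge> 0" and h0: "h \<ge> 0"
    using yK by (auto simp: Kset_def n1_def n2_def h_def)
  have s: "a1 + a2 + a3 = 0" using adm by (simp add: admissible_def a1_def a2_def a3_def)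
  have hC: "h ^ 2 + n1 * n2 / 6 = 1" using adm z by (simp add: admissible_def h_def n1_def n2_def algebra_simps)
  have O: "1 - (a1 ^ 2 + a2 ^ 2 + a3 ^ 2) / 6 - (n1 ^ 2 + n2 ^ 2) / 12 \<ge> 0"
    using adm z by (simp add: admissible_def Omg_def Sig2_def a1_def a2_def a3_def n1_def n2_def algebra_simps)
  define m1 where "m1 k = (1 - ee k) * n1 + ee k / 10" for k
  define m2 where "m2 k = (1 - ee k) * n2 + ee k / 10" for k
  define c1 where "c1 k = (1 - ee k) * a1" for k
  define c2 where "c2 k = (1 - ee k) * a2" for k
  define c3 where "c3 k = (1 - ee k) * a3" for k
  define hh where "hh k = sqrt (1 - m1 k * m2 k / 6)" for k
  define zs where "zs k = mk (hh k) (c1 k) (c2 k) (c3 k) (m1 k) (m2 k) 0" for k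
  have mem: "zs k \<in> B_N1N2" for k
  proof -
    note ap = approx[OF s hC nn O ee(1)[of k] ee(2)[of k]]
    have lt: "1 - m1 k * m2 k / 6 > 0" using ap(4) by (simp add: m1_def m2_def)
    have hh2: "hh k ^ 2 = 1 - m1 k * m2 k / 6" using lt by (simp add: hh_def)
    have hhp: "hh k > 0" using lt by (simp add: hh_def)
    have f1: "c1 k + c2 k + c3 k = 0" using ap(1) by (simp add: c1_def c2_def c3_def)
    have f2: "m1 k > 0" "m2 k > 0" using ap(2,3) by (simp_all add: m1_def m2_def)
    have f3: "1 - (c1 k ^ 2 + c2 k ^ 2 + c3 k ^ 2) / 6 - (m1 k ^ 2 + m2 k ^ 2) / 12 \<ge> 0"
      using ap(5) by (simp add: m1_def m2_def c1_def c2_def c3_def)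
    have f3': "1 - (c1 k ^ 2 + c2 k ^ 2 + c3 k ^ 2) / 6 - (m2 k ^ 2 + m1 k ^ 2) / 12 \<ge> 0"
      using f3 by (simp add: add.commute)
    have hh2': "hh k ^ 2 = 1 - m2 k * m1 k / 6" using hh2 by (simp add: mult.commute)
    show ?thesis
      unfolding zs_def B_N1N2_def admissible_def Omg_def Sig2_def mk_comp
      using f1 f2 f3 f3' hh2 hh2' hhp by (simp add: mk_comp)
  qed
  have lim: "zs \<longlonglongrightarrow> mk h a1 a2 a3 n1 n2 0"
  proof -
    have e0: "ee \<longlonglongrightarrow> 0" by (rule ee(3))
    have "(\<lambda>k. (1 - ee k) * n1 + ee k / 10) \<longlonglongrightarrow> (1 - 0) * n1 + 0 / 10"
      by (intro tendsto_intros e0) simp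
    then have l1: "m1 \<longlonglongrightarrow> n1" by (simp add: m1_def[abs_def])
    have "(\<lambda>k. (1 - ee k) * n2 + ee k / 10) \<longlonglongrightarrow> (1 - 0) * n2 + 0 / 10"
      by (intro tendsto_intros e0) simp
    then have l2: "m2 \<longlonglongrightarrow> n2" by (simp add: m2_def[abs_def])
    have "(\<lambda>k. (1 - ee k) * a1) \<longlonglongrightarrow> (1 - 0) * a1" "(\<lambda>k. (1 - ee k) * a2) \<longlonglongrightarrow> (1 - 0) * a2"
      "(\<lambda>k. (1 - ee k) * a3) \<longlonglongrightarrow> (1 - 0) * a3"
      by (intro tendsto_intros e0)+
    then have lc: "c1 \<longlonglongrightarrow> a1" "c2 \<longlonglongrightarrow> a2" "c3 \<longlonglongrightarrow> a3"
      by (simp_all add: c1_def[abs_def] c2_def[abs_def] c3_def[abs_def])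
    have "hh \<longlonglongrightarrow> sqrt (1 - n1 * n2 / 6)"
      unfolding hh_def[abs_def] by (intro tendsto_intros l1 l2) simp
    moreover have "sqrt (1 - n1 * n2 / 6) = h" using hC h0 by (intro real_sqrt_unique) auto
    ultimately have lh: "hh \<longlonglongrightarrow> h" by simp
    show ?thesis unfolding zs_def[abs_def] by (intro tendsto_mk lh lc l1 l2 tendsto_const)
  qed
  have "y = mk h a1 a2 a3 n1 n2 0"
    by (subst mk_eta) (simp add: z h_def a1_def a2_def a3_def n1_def n2_def)
  then show ?thesis using mem lim closure_sequential by metis
qed

lemma clos_23:
  assumes yK: "y \<in> Kset" and z: "N1 y = 0"
  shows "y \<in> closure B_N2N3"
proof -
  define h where "h = Hc y"
  define a1 where "a1 = S1 y"
  define a2 where "a2 = S2 y"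
  define a3 where "a3 = S3 y"
  define n1 where "n1 = N2 y"
  define n2 where "n2 = N3 y"
  have adm: "admissible y" and nn: "n1 \<ge> 0" "n2 \<ge> 0" and h0: "h \<ge> 0"
    using yK by (auto simp: Kset_def n1_def n2_def h_def)
  have s: "a1 + a2 + a3 = 0" using adm by (simp add: admissible_def a1_def a2_def a3_def)
  have hC: "h ^ 2 + n1 * n2 / 6 = 1" using adm z by (simp add: admissible_def h_def n1_def n2_def algebra_simps)
  have O: "1 - (a1 ^ 2 + a2 ^ 2 + a3 ^ 2) / 6 - (n1 ^ 2 + n2 ^ 2) / 12 \<ge> 0"
    using adm z by (simp add: admissible_def Omg_def Sig2_def a1_def a2_def a3_def n1_def n2_def algebra_simps)
  define m1 where "m1 k = (1 - ee k) * n1 + ee k / 10" for k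
  define m2 where "m2 k = (1 - ee k) * n2 + ee k / 10" for k
  define c1 where "c1 k = (1 - ee k) * a1" for k
  define c2 where "c2 k = (1 - ee k) * a2" for k
  define c3 where "c3 k = (1 - ee k) * a3" for k
  define hh where "hh k = sqrt (1 - m1 k * m2 k / 6)" for k
  define zs where "zs k = mk (hh k) (c1 k) (c2 k) (c3 k) 0 (m1 k) (m2 k)" for k
  have mem: "zs k \<in> B_N2N3" for k
  proof -
    note ap = approx[OF s hC nn O ee(1)[of k] ee(2)[of k]]
    have lt: "1 - m1 k * m2 k / 6 > 0" using ap(4) by (simp add: m1_def m2_def)
    have hh2: "hh k ^ 2 = 1 - m1 k * m2 k / 6" using lt by (simp add: hh_def)
    have hhp: "hh k > 0" using lt by (simp add: hh_def)
    have f1: "c1 k + c2 k + c3 k = 0" using ap(1) by (simp add: c1_def c2_def c3_def)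
    have f2: "m1 k > 0" "m2 k > 0" using ap(2,3) by (simp_all add: m1_def m2_def)
    have f3: "1 - (c1 k ^ 2 + c2 k ^ 2 + c3 k ^ 2) / 6 - (m1 k ^ 2 + m2 k ^ 2) / 12 \<ge> 0"
      using ap(5) by (simp add: m1_def m2_def c1_def c2_def c3_def)
    have f3': "1 - (c1 k ^ 2 + c2 k ^ 2 + c3 k ^ 2) / 6 - (m2 k ^ 2 + m1 k ^ 2) / 12 \<ge> 0"
      using f3 by (simp add: add.commute)
    have hh2': "hh k ^ 2 = 1 - m2 k * m1 k / 6" using hh2 by (simp add: mult.commute)
    show ?thesis
      unfolding zs_def B_N2N3_def admissible_def Omg_def Sig2_def mk_comp
      using f1 f2 f3 f3' hh2 hh2' hhp by (simp add: mk_comp)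
  qed
  have lim: "zs \<longlonglongrightarrow> mk h a1 a2 a3 0 n1 n2"
  proof -
    have e0: "ee \<longlonglongrightarrow> 0" by (rule ee(3))
    have "(\<lambda>k. (1 - ee k) * n1 + ee k / 10) \<longlonglongrightarrow> (1 - 0) * n1 + 0 / 10"
      by (intro tendsto_intros e0) simp
    then have l1: "m1 \<longlonglongrightarrow> n1" by (simp add: m1_def[abs_def])
    have "(\<lambda>k. (1 - ee k) * n2 + ee k / 10) \<longlonglongrightarrow> (1 - 0) * n2 + 0 / 10"
      by (intro tendsto_intros e0) simp
    then have l2: "m2 \<longlonglongrightarrow> n2" by (simp add: m2_def[abs_def])
    have "(\<lambda>k. (1 - ee k) * a1) \<longlonglongrightarrow> (1 - 0) * a1" "(\<lambda>k. (1 - ee k) * a2) \<longlonglongrightarrow> (1 - 0) * a2"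
      "(\<lambda>k. (1 - ee k) * a3) \<longlonglongrightarrow> (1 - 0) * a3"
      by (intro tendsto_intros e0)+
    then have lc: "c1 \<longlonglongrightarrow> a1" "c2 \<longlonglongrightarrow> a2" "c3 \<longlonglongrightarrow> a3"
      by (simp_all add: c1_def[abs_def] c2_def[abs_def] c3_def[abs_def])
    have "hh \<longlonglongrightarrow> sqrt (1 - n1 * n2 / 6)"
      unfolding hh_def[abs_def] by (intro tendsto_intros l1 l2) simp
    moreover have "sqrt (1 - n1 * n2 / 6) = h" using hC h0 by (intro real_sqrt_unique) auto
    ultimately have lh: "hh \<longlonglongrightarrow> h" by simp
    show ?thesis unfolding zs_def[abs_def] by (intro tendsto_mk lh lc l1 l2 tendsto_const)
  qed
  have "y = mk h a1 a2 a3 0 n1 n2"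
    by (subst mk_eta) (simp add: z h_def a1_def a2_def a3_def n1_def n2_def)
  then show ?thesis using mem lim closure_sequential by metis
qed

lemma clos_31:
  assumes yK: "y \<in> Kset" and z: "N2 y = 0"
  shows "y \<in> closure B_N3N1"
proof -
  define h where "h = Hc y"
  define a1 where "a1 = S1 y"
  define a2 where "a2 = S2 y"
  define a3 where "a3 = S3 y"
  define n1 where "n1 = N3 y"
  define n2 where "n2 = N1 y"
  have adm: "admissible y" and nn: "n1 \<ge> 0" "n2 \<ge> 0" and h0: "h \<ge> 0"
    using yK by (auto simp: Kset_def n1_def n2_def h_def)
  have s: "a1 + a2 + a3 = 0" using adm by (simp add: admissible_def a1_def a2_def a3_def)
  have hC: "h ^ 2 + n1 * n2 / 6 = 1" using adm z by (simp add: admissible_def h_def n1_def n2_def algebra_simps)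
  have O: "1 - (a1 ^ 2 + a2 ^ 2 + a3 ^ 2) / 6 - (n1 ^ 2 + n2 ^ 2) / 12 \<ge> 0"
    using adm z by (simp add: admissible_def Omg_def Sig2_def a1_def a2_def a3_def n1_def n2_def algebra_simps)
  define m1 where "m1 k = (1 - ee k) * n1 + ee k / 10" for k
  define m2 where "m2 k = (1 - ee k) * n2 + ee k / 10" for k
  define c1 where "c1 k = (1 - ee k) * a1" for k
  define c2 where "c2 k = (1 - ee k) * a2" for k
  define c3 where "c3 k = (1 - ee k) * a3" for k
  define hh where "hh k = sqrt (1 - m1 k * m2 k / 6)" for k
  define zs where "zs k = mk (hh k) (c1 k) (c2 k) (c3 k) (m2 k) 0 (m1 k)" for k
  have mem: "zs k \<in> B_N3N1" for k
  proof -
    note ap = approx[OF s hC nn O ee(1)[of k] ee(2)[of k]]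
    have lt: "1 - m1 k * m2 k / 6 > 0" using ap(4) by (simp add: m1_def m2_def)
    have hh2: "hh k ^ 2 = 1 - m1 k * m2 k / 6" using lt by (simp add: hh_def)
    have hhp: "hh k > 0" using lt by (simp add: hh_def)
    have f1: "c1 k + c2 k + c3 k = 0" using ap(1) by (simp add: c1_def c2_def c3_def)
    have f2: "m1 k > 0" "m2 k > 0" using ap(2,3) by (simp_all add: m1_def m2_def)
    have f3: "1 - (c1 k ^ 2 + c2 k ^ 2 + c3 k ^ 2) / 6 - (m1 k ^ 2 + m2 k ^ 2) / 12 \<ge> 0"
      using ap(5) by (simp add: m1_def m2_def c1_def c2_def c3_def)
    have f3': "1 - (c1 k ^ 2 + c2 k ^ 2 + c3 k ^ 2) / 6 - (m2 k ^ 2 + m1 k ^ 2) / 12 \<ge> 0"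
      using f3 by (simp add: add.commute)
    have hh2': "hh k ^ 2 = 1 - m2 k * m1 k / 6" using hh2 by (simp add: mult.commute)
    show ?thesis
      unfolding zs_def B_N3N1_def admissible_def Omg_def Sig2_def mk_comp
      using f1 f2 f3 f3' hh2 hh2' hhp by (simp add: mk_comp)
  qed
  have lim: "zs \<longlonglongrightarrow> mk h a1 a2 a3 n2 0 n1"
  proof -
    have e0: "ee \<longlonglongrightarrow> 0" by (rule ee(3))
    have "(\<lambda>k. (1 - ee k) * n1 + ee k / 10) \<longlonglongrightarrow> (1 - 0) * n1 + 0 / 10"
      by (intro tendsto_intros e0) simp
    then have l1: "m1 \<longlonglongrightarrow> n1" by (simp add: m1_def[abs_def])
    have "(\<lambda>k. (1 - ee k) * n2 + ee k / 10) \<longlonglongrightarrow> (1 - 0) * n2 + 0 / 10"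
      by (intro tendsto_intros e0) simp
    then have l2: "m2 \<longlonglongrightarrow> n2" by (simp add: m2_def[abs_def])
    have "(\<lambda>k. (1 - ee k) * a1) \<longlonglongrightarrow> (1 - 0) * a1" "(\<lambda>k. (1 - ee k) * a2) \<longlonglongrightarrow> (1 - 0) * a2"
      "(\<lambda>k. (1 - ee k) * a3) \<longlonglongrightarrow> (1 - 0) * a3"
      by (intro tendsto_intros e0)+
    then have lc: "c1 \<longlonglongrightarrow> a1" "c2 \<longlonglongrightarrow> a2" "c3 \<longlonglongrightarrow> a3"
      by (simp_all add: c1_def[abs_def] c2_def[abs_def] c3_def[abs_def])
    have "hh \<longlonglongrightarrow> sqrt (1 - n1 * n2 / 6)"
      unfolding hh_def[abs_def] by (intro tendsto_intros l1 l2) simp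
    moreover have "sqrt (1 - n1 * n2 / 6) = h" using hC h0 by (intro real_sqrt_unique) auto
    ultimately have lh: "hh \<longlonglongrightarrow> h" by simp
    show ?thesis unfolding zs_def[abs_def] by (intro tendsto_mk lh lc l1 l2 tendsto_const)
  qed
  have "y = mk h a1 a2 a3 n2 0 n1"
    by (subst mk_eta) (simp add: z h_def a1_def a2_def a3_def n1_def n2_def)
  then show ?thesis using mem lim closure_sequential by metis
qed


theorem lemma2:
  fixes w :: real and x :: "real \<Rightarrow> real^7"
  assumes "-(1/3) < w" and "w < 1"
    and "x 0 \<in> B_IX"
    and "\<And>t. t \<ge> 0 \<Longrightarrow> (x has_vector_derivative vfield w (x t)) (at t within {0..})"
  shows "omega_limit x \<noteq> {} \<and> omega_limit x \<subseteq> closure B_VII0"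
proof -
  interpret traj w x using assms by unfold_locales
  have ne: "omega_limit x \<noteq> {}"
  proof -
    have "\<forall>n. x (real n) \<in> Kset" by (auto intro!: xK)
    then obtain l r where lr: "l \<in> Kset" "strict_mono (r :: nat \<Rightarrow> nat)" "((\<lambda>n. x (real n)) \<circ> r) \<longlonglongrightarrow> l"
      using seq_compactE[OF compact_imp_seq_compact[OF Kcompact]] by metis
    have "filterlim (\<lambda>n. real (r n)) at_top sequentially"
      using filterlim_compose[OF filterlim_real_sequentially filterlim_subseq[OF lr(2)]] by (simp add: o_def)
    moreover have "((\<lambda>n. x (real (r n))) \<longlongrightarrow> l) sequentially" using lr(3) by (simp add: o_def)
    ultimately have "l \<in> omega_limit x" unfolding omega_limit_def by blast
    then show ?thesis by blast
  qed
  have sub: "omega_limit x \<subseteq> closure B_VII0"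
  proof
    fix y assume y: "y \<in> omega_limit x"
    have yK: "y \<in> Kset" by (rule omega_K[OF y])
    have c: "closure B_N1N2 \<subseteq> closure B_VII0" "closure B_N2N3 \<subseteq> closure B_VII0" "closure B_N3N1 \<subseteq> closure B_VII0"
      unfolding B_VII0_def by (auto intro!: closure_mono)
    from omega_VII[OF y] show "y \<in> closure B_VII0"
      using clos_12[OF yK] clos_23[OF yK] clos_31[OF yK] c by blast
  qed
  from ne sub show ?thesis by blast
qed


end
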